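(* Let $N\in\mathbb{N}$. (i) For any $k\in\mathbb{Z}_+$ and $s\in\mathbb{R}$, $$\gamma_N^{s,k}=k!\sum_{l=0}^{\lfloor k/2\rfloor}(k-2l)!\,l!\,\Bigl(\frac{N-3}{2}+l\Bigr)_l\Bigl(\sum_{n=\lceil k/2\rceil}^{k-l}2^{2n-k+l}\binom{s/2}{n}\binom{n}{k-n}\binom{k-n}{l}\Bigr)^2.$$ (ii) For any $k\in\mathbb{N}$, $$\ell_N^k=k!\sum_{l=0}^{\lfloor k/2\rfloor}(k-2l)!\,l!\,\Bigl(\frac{N-3}{2}+l\Bigr)_l\Bigl(\sum_{n=\lceil k/2\rceil}^{k-l}2^{2n-k+l}\frac{(-1)^n}{2n}\binom{n}{k-n}\binom{k-n}{l}\Bigr)^2.$$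
   Context: $|x|_N$ is the Euclidean norm on $\mathbb{R}^N$, $\log$ the natural logarithm, $I_N=\{1,\ldots,N\}$, $D_i=\partial_{x_{i_1}}\cdots\partial_{x_{i_k}}$ for $i=(i_1,\ldots,i_k)\in I_N^k$, and $|\nabla_N^k u(x)|_{N^k}=\bigl(\sum_{i\in I_N^k}(D_iu(x))^2\bigr)^{1/2}$ (for $k=0$ this is $|u(x)|$). It is known that for $k\in\mathbb{Z}_+$, $s\in\mathbb{R}$ the function $x\mapsto(|x|_N^{k-s}|\nabla_N^k[|x|_N^s]|_{N^k})^2$ is constant on $\mathbb{R}^N\setminus\{0\}$; its value is denoted $\gamma_N^{s,k}$. Likewise for $k\in\mathbb{N}$ the function $x\mapsto(|x|_N^{k}|\nabla_N^k[\log|x|_N]|_{N^k})^2$ is constant on $\mathbb{R}^N\setminus\{0\}$, with value $\ell_N^k$. Notation: $(\nu)_k=\prod_{j=0}^{k-1}(\nu-j)$ for $k\in\mathbb{N}$, $(\nu)_0=1$; $\binom{\nu}{k}=(\nu)_k/k!$ for $\nu\in\mathbb{R}$, $k\in\mathbb{Z}_+$; $\lfloor\cdot\rfloor,\lceil\cdot\rceil$ are floor and ceiling. *)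

theory Defs
  imports "HOL-Analysis.Analysis"
begin

text \<open>Partial derivative of a real function on the Euclidean space real^'n
  (dimension N = CARD('n)) in the direction of the j-th coordinate axis.\<close>
definition partial_coord :: "'n::finite \<Rightarrow> (real^'n \<Rightarrow> real) \<Rightarrow> real^'n \<Rightarrow> real" where
  "partial_coord j f x = deriv (\<lambda>t. f (x + t *\<^sub>R axis j 1)) 0"

fun Dmulti :: "'n::finite list \<Rightarrow> (real^'n \<Rightarrow> real) \<Rightarrow> real^'n \<Rightarrow> real" where
  "Dmulti [] f = f"
| "Dmulti (j # js) f = partial_coord j (Dmulti js f)"

definition grad_norm :: "nat \<Rightarrow> (real^'n::finite \<Rightarrow> real) \<Rightarrow> real^'n \<Rightarrow> real" where
  "grad_norm k f x = sqrt (\<Sum>is\<in>{is :: 'n list. length is = k}. (Dmulti is f x)\<^sup>2)"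

definition falling :: "real \<Rightarrow> nat \<Rightarrow> real" where
  "falling \<nu> k = (\<Prod>j<k. \<nu> - real j)"

end

theory Submission
  imports Defs "HOL-Computational_Algebra.Formal_Power_Series"
begin
function Pm :: "('a \<Rightarrow> real) \<Rightarrow> 'a list \<Rightarrow> nat \<Rightarrow> real" where
  "Pm v [] n = (if n = 0 then 1 else 0)"
| "Pm v (i#J) 0 = 0"
| "Pm v (i#J) (Suc n) = v i * Pm v J n + real (count (mset J) i) * Pm v (remove1 i J) n"
  by pat_completeness auto
termination
  by (relation "Wellfounded.measure (\<lambda>(v,I,n). length I)") (auto simp: length_remove1)

lemma Pm_cons_swap:
  "Pm v (i#j#K) n = Pm v (j#i#K) n"
proof (cases "i = j")
  case True thus ?thesis by simp
next
  case False
  show ?thesis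
  proof (cases n)
    case 0 thus ?thesis by simp
  next
    case (Suc m)
    show ?thesis
    proof (cases m)
      case 0 thus ?thesis using Suc False by simp
    next
      case (Suc m')
      have c1: "count (mset (remove1 i K)) j = count (mset K) j"
        using False by (simp add: mset_remove1)
      have c2: "count (mset (remove1 j K)) i = count (mset K) i"
        using False by (simp add: mset_remove1)
      show ?thesis using \<open>n = Suc m\<close> Suc False c1 c2
        by (simp add: remove1_commute algebra_simps)
    qed
  qed
qed

lemma Pm_mset:
  "mset I = mset I' \<Longrightarrow> Pm v I n = Pm v I' n"
proof (induction "length I" arbitrary: I I' n rule: less_induct)
  case less
  show ?case
  proof (cases I)
    case Nil thus ?thesis using less.prems by simp
  next
    case (Cons i J)
    then obtain i' J' where I': "I' = i' # J'"
      using less.prems by (cases I') auto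
    have samehead: "Pm v (a#X) m = Pm v (a#Y) m"
      if "mset X = mset Y" "length X < length I" for a X Y m
    proof (cases m)
      case 0 thus ?thesis by simp
    next
      case (Suc m')
      have "Pm v X m' = Pm v Y m'" by (rule less.hyps[OF that(2) that(1)])
      moreover have "Pm v (remove1 a X) m' = Pm v (remove1 a Y) m'"
      proof (rule less.hyps)
        show "length (remove1 a X) < length I" using that(2) by (auto simp: length_remove1)
        show "mset (remove1 a X) = mset (remove1 a Y)" using that(1) by (simp add: mset_remove1)
      qed
      ultimately show ?thesis using Suc that by simp
    qed
    show ?thesis
    proof (cases "i = i'")
      case True
      then have "mset J = mset J'" using less.prems Cons I' by simp
      moreover have "length J < length I" using Cons by simp
      ultimately have "Pm v (i#J) n = Pm v (i#J') n" by (rule samehead)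
      thus ?thesis using Cons I' True by simp
    next
      case False
      have iJ: "i' \<in> set J"
      proof -
        have "set I = set I'" using less.prems by (rule mset_eq_setD)
        thus ?thesis using Cons I' False by auto
      qed
      define K where "K = remove1 i' J"
      have mJ: "mset J = mset (i' # K)" using iJ K_def by simp
      have e: "add_mset i (add_mset i' (mset K)) = add_mset i' (mset J')"
        using less.prems Cons I' mJ by simp
      have mJ': "mset J' = mset (i # K)"
      proof -
        have "mset J' = add_mset i' (mset J') - {#i'#}" by simp
        also have "\<dots> = add_mset i (add_mset i' (mset K)) - {#i'#}" using e by simp
        also have "\<dots> = add_mset i (mset K)" using False by (simp add: add_mset_commute)
        finally show ?thesis by simp
      qed
      have lJ: "length J < length I" using Cons by simp
      have "Pm v I n = Pm v (i # i' # K) n" using samehead[OF mJ lJ] Cons by simp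
      also have "\<dots> = Pm v (i' # i # K) n" by (rule Pm_cons_swap)
      also have "\<dots> = Pm v I' n"
      proof -
        have "length (i # K) < length I" using mJ lJ Cons by (metis mset_eq_length length_Cons)
        thus ?thesis using samehead[OF mJ'[symmetric]] I' by simp
      qed
      finally show ?thesis .
    qed
  qed
qed

definition lenl :: "nat \<Rightarrow> 'a list set" where "lenl k = {xs. length xs = k}"

lemma finite_lenl[simp]: "finite (lenl k :: ('a::finite) list set)"
proof -
  have "lenl k = {xs. set xs \<subseteq> (UNIV::'a set) \<and> length xs = k}" by (auto simp: lenl_def)
  thus ?thesis using finite_lists_length_eq[of "UNIV::'a set" k] by simp
qed

lemma lenl_0: "lenl 0 = {[]}" by (auto simp: lenl_def)

lemma lenl_Suc: "lenl (Suc m) = (\<lambda>(j,K). j#K) ` (UNIV \<times> lenl m)"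
  by (auto simp: lenl_def image_iff length_Suc_conv)

lemma sum_lenl_Suc:
  fixes F :: "'a::finite list \<Rightarrow> real"
  shows "(\<Sum>I\<in>lenl (Suc m). F I) = (\<Sum>j\<in>UNIV. \<Sum>K\<in>lenl m. F (j#K))"
proof -
  have inj: "inj_on (\<lambda>(j,K). j#K) (UNIV \<times> lenl m)" by (auto simp: inj_on_def)
  have "(\<Sum>I\<in>lenl (Suc m). F I) = (\<Sum>p\<in>UNIV \<times> lenl m. F ((\<lambda>(j,K). j#K) p))"
    unfolding lenl_Suc by (rule sum.reindex[OF inj, unfolded comp_def])
  also have "\<dots> = (\<Sum>(j,K)\<in>UNIV \<times> lenl m. F (j#K))"
    by (simp add: case_prod_beta')
  also have "\<dots> = (\<Sum>j\<in>UNIV. \<Sum>K\<in>lenl m. F (j#K))"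
    by (rule sum.cartesian_product[symmetric])
  finally show ?thesis .
qed

lemma Pm_nil_len: "length I < n \<Longrightarrow> Pm v I n = 0"
proof (induction I arbitrary: n rule: length_induct)
  case (1 I)
  show ?case
  proof (cases I)
    case Nil thus ?thesis using 1 by simp
  next
    case (Cons i J)
    then obtain m where n: "n = Suc m" using 1 by (cases n) auto
    have "Pm v J m = 0" using 1 Cons n by simp
    moreover have "Pm v (remove1 i J) m = 0"
    proof -
      have "length (remove1 i J) \<le> length J" by (simp add: length_remove1)
      thus ?thesis using 1 Cons n by simp
    qed
    ultimately show ?thesis using Cons n by simp
  qed
qed

lemma Pm_cons_zero[simp]: "Pm v (i#J) 0 = 0" by simp

lemma count_remove1_same:
  "i \<in> set J \<Longrightarrow> Pm v (i # remove1 i J) n = Pm v J n"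
  by (rule Pm_mset) simp

lemma sum_count_remove1:
  fixes H :: "'a::finite list \<Rightarrow> real"
  assumes H: "\<And>X Y. mset X = mset Y \<Longrightarrow> H X = H Y"
  shows "(\<Sum>J\<in>lenl (Suc m). real (count (mset J) i) * H (remove1 i J))
         = real (Suc m) * (\<Sum>K\<in>lenl m. H K)"
  using H
proof (induction m arbitrary: H)
  case 0
  have "(\<Sum>J\<in>lenl (Suc 0). real (count (mset J) i) * H (remove1 i J))
      = (\<Sum>j\<in>UNIV. (if j = i then H [] else 0))"
    unfolding sum_lenl_Suc lenl_0 by (intro sum.cong) auto
  also have "\<dots> = H []" by simp
  finally show ?case by (simp add: lenl_0)
next
  case (Suc m)
  have step: "real (count (mset (j#J)) i) * H (remove1 i (j#J))
      = (if j = i then H J else 0) + real (count (mset J) i) * H (j # remove1 i J)" for j J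
  proof (cases "j = i")
    case True
    have "count (mset J) i > 0 \<Longrightarrow> H (i # remove1 i J) = H J"
      by (rule Suc.prems) simp
    thus ?thesis using True by (cases "count (mset J) i > 0") (auto simp: algebra_simps)
  next
    case False thus ?thesis by simp
  qed
  have "(\<Sum>J\<in>lenl (Suc (Suc m)). real (count (mset J) i) * H (remove1 i J))
     = (\<Sum>j\<in>UNIV. \<Sum>J\<in>lenl (Suc m). (if j = i then H J else 0)
            + real (count (mset J) i) * H (j # remove1 i J))"
    unfolding sum_lenl_Suc[of _ "Suc m"] step by simp
  also have "\<dots> = (\<Sum>J\<in>lenl (Suc m). H J) + (\<Sum>j\<in>UNIV. \<Sum>J\<in>lenl (Suc m).
            real (count (mset J) i) * H (j # remove1 i J))"
  proof -
    have A: "(\<Sum>j\<in>UNIV. \<Sum>J\<in>lenl (Suc m). (if j = i then H J else 0)) = (\<Sum>J\<in>lenl (Suc m). H J)"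
    proof -
      have "\<And>j. (\<Sum>J\<in>lenl (Suc m). (if j = i then H J else 0)) = (if j = i then (\<Sum>J\<in>lenl (Suc m). H J) else 0)"
        by simp
      thus ?thesis by simp
    qed
    show ?thesis by (simp only: sum.distrib A)
  qed
  also have "(\<Sum>j\<in>UNIV. \<Sum>J\<in>lenl (Suc m). real (count (mset J) i) * H (j # remove1 i J))
      = (\<Sum>j\<in>UNIV. real (Suc m) * (\<Sum>K\<in>lenl m. H (j # K)))"
  proof (rule sum.cong[OF refl])
    fix j
    show "(\<Sum>J\<in>lenl (Suc m). real (count (mset J) i) * H (j # remove1 i J))
      = real (Suc m) * (\<Sum>K\<in>lenl m. H (j # K))"
      by (rule Suc.IH[of "\<lambda>K. H (j#K)"]) (rule Suc.prems, simp)
  qed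
  also have "\<dots> = real (Suc m) * (\<Sum>K\<in>lenl (Suc m). H K)"
    by (simp add: sum_lenl_Suc[of _ m] sum_distrib_left)
  finally show ?case by (simp add: algebra_simps)
qed

definition rr :: "('a::finite \<Rightarrow> real) \<Rightarrow> real" where "rr v = (\<Sum>i\<in>UNIV. (v i)^2)"

lemma sum_count_mset: "(\<Sum>i\<in>(UNIV::'a::finite set). real (count (mset K) i)) = real (length K)"
proof (induction K)
  case Nil thus ?case by simp
next
  case (Cons a K)
  have "(\<Sum>i\<in>(UNIV::'a set). real (count (mset (a#K)) i))
      = (\<Sum>i\<in>UNIV. real (count (mset K) i) + (if i = a then 1 else 0))"
    by (intro sum.cong) auto
  also have "\<dots> = real (length K) + 1" using Cons by (simp add: sum.distrib)
  finally show ?case by simp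
qed

lemma step_cons:
  "real (count (mset (j#J')) i) * Pm v (remove1 i (j#J')) m
   = (if i = j then Pm v J' m else 0) + real (count (mset J') i) * Pm v (j # remove1 i J') m"
proof (cases "i = j")
  case True
  have "count (mset J') i > 0 \<Longrightarrow> Pm v (i # remove1 i J') m = Pm v J' m"
    by (rule Pm_mset) simp
  thus ?thesis using True by (cases "count (mset J') i > 0") (auto simp: algebra_simps)
next
  case False thus ?thesis by simp
qed

lemma cnt_comm:
  "real (count (mset J) i) * real (count (mset (remove1 i J)) j)
   = real (count (mset J) j) * real (count (mset (remove1 j J)) i)"
  by (cases "i = j") (auto simp: mset_remove1)

lemma sum_delta_add:
  fixes v :: "'a::finite \<Rightarrow> real"
  shows "(\<Sum>i\<in>UNIV. v i * ((if i = j then a else 0) + b i)) = v j * a + (\<Sum>i\<in>UNIV. v i * b i)"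
proof -
  have "(\<Sum>i\<in>UNIV. v i * ((if i = j then a else 0) + b i))
     = (\<Sum>i\<in>UNIV. (if i = j then v i * a else 0)) + (\<Sum>i\<in>UNIV. v i * b i)"
    by (subst sum.distrib[symmetric]) (intro sum.cong, auto simp: distrib_left)
  thus ?thesis by simp
qed

lemma euler:
  fixes v :: "'a::finite \<Rightarrow> real"
  shows "(\<Sum>i\<in>UNIV. v i * (real (count (mset J) i) * Pm v (remove1 i J) m))
       = (2 * real m + 2 - real (length J)) * Pm v J (Suc m)"
proof (induction "length J" arbitrary: J m rule: less_induct)
  case less
  show ?case
  proof (cases J)
    case Nil thus ?thesis by simp
  next
    case (Cons j J')
    have L: "(\<Sum>i\<in>UNIV. v i * (real (count (mset J) i) * Pm v (remove1 i J) m))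
      = v j * Pm v J' m + (\<Sum>i\<in>UNIV. v i * (real (count (mset J') i) * Pm v (j # remove1 i J') m))"
      unfolding Cons step_cons by (rule sum_delta_add)
    show ?thesis
    proof (cases m)
      case 0
      have "(\<Sum>i\<in>UNIV. v i * (real (count (mset J') i) * Pm v (j # remove1 i J') m)) = 0"
        using 0 by simp
      moreover have "(2 * real m + 2 - real (length J)) * Pm v J (Suc m) = v j * Pm v J' m"
      proof (cases J')
        case Nil thus ?thesis using 0 Cons by simp
      next
        case (Cons a K)
        show ?thesis
        proof (cases "remove1 j J' = []")
          case True
          then have "J' = [j]" using Cons by (cases "a = j") auto
          thus ?thesis using 0 \<open>J = j # J'\<close> by simp
        next
          case False
          then have "Pm v (remove1 j J') 0 = 0" by (cases "remove1 j J'") auto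
          thus ?thesis using 0 \<open>J = j # J'\<close> Cons by simp
        qed
      qed
      ultimately show ?thesis using L by simp
    next
      case (Suc m')
      have "(\<Sum>i\<in>UNIV. v i * (real (count (mset J') i) * Pm v (j # remove1 i J') m))
        = (\<Sum>i\<in>UNIV. v j * (v i * (real (count (mset J') i) * Pm v (remove1 i J') m'))
            + real (count (mset J') j) * (v i * (real (count (mset (remove1 j J')) i)
                * Pm v (remove1 i (remove1 j J')) m')))"
      proof (rule sum.cong[OF refl])
        fix i
        show "v i * (real (count (mset J') i) * Pm v (j # remove1 i J') m)
          = v j * (v i * (real (count (mset J') i) * Pm v (remove1 i J') m'))
            + real (count (mset J') j) * (v i * (real (count (mset (remove1 j J')) i)
                * Pm v (remove1 i (remove1 j J')) m'))"
          using cnt_comm[of J' i j] Suc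
          by (simp add: remove1_commute algebra_simps)
      qed
      also have "\<dots> = v j * (2 * real m' + 2 - real (length J')) * Pm v J' m
          + real (count (mset J') j) * ((2 * real m' + 2 - real (length (remove1 j J'))) * Pm v (remove1 j J') m)"
      proof -
        have l1: "length J' < length J" using Cons by simp
        have l2: "length (remove1 j J') < length J" using Cons by (auto simp: length_remove1)
        show ?thesis
          using less.hyps[OF l1, of m'] less.hyps[OF l2, of m'] Suc
          by (simp add: sum.distrib sum_distrib_left[symmetric] mult.assoc)
      qed
      finally have R: "(\<Sum>i\<in>UNIV. v i * (real (count (mset J') i) * Pm v (j # remove1 i J') m))
          = v j * (2 * real m' + 2 - real (length J')) * Pm v J' m
          + real (count (mset J') j) * ((2 * real m' + 2 - real (length (remove1 j J'))) * Pm v (remove1 j J') m)" .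
      have len: "real (count (mset J') j) * real (length (remove1 j J'))
          = real (count (mset J') j) * (real (length J') - 1)"
      proof (cases "j \<in> set J'")
        case True
        then have "length J' \<ge> 1" by (cases J') auto
        thus ?thesis using True by (simp add: length_remove1 of_nat_diff)
      qed (simp add: count_eq_zero_iff)
      have T: "Pm v J (Suc m) = v j * Pm v J' m + real (count (mset J') j) * Pm v (remove1 j J') m"
        using Cons by simp
      have lenJ: "real (length J) = real (length J') + 1" using Cons by simp
      have c: "real (count (mset J') j) * ((2 * real m' + 2 - real (length (remove1 j J'))) * Pm v (remove1 j J') m)
        = real (count (mset J') j) * ((2 * real m' + 2 - (real (length J') - 1)) * Pm v (remove1 j J') m)"
      proof -
        have "real (count (mset J') j) * ((2 * real m' + 2 - real (length (remove1 j J'))) * Pm v (remove1 j J') m)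
          = (real (count (mset J') j) * (2 * real m' + 2) - real (count (mset J') j) * real (length (remove1 j J'))) * Pm v (remove1 j J') m"
          by (simp add: algebra_simps)
        also have "\<dots> = (real (count (mset J') j) * (2 * real m' + 2) - real (count (mset J') j) * (real (length J') - 1)) * Pm v (remove1 j J') m"
          by (simp only: len)
        finally show ?thesis by (simp add: algebra_simps)
      qed
      have mm: "real m = real m' + 1" using Suc by simp
      show ?thesis unfolding L R T lenJ c mm by (simp add: algebra_simps)
    qed
  qed
qed

lemma contr_a:
  fixes v :: "'a::finite \<Rightarrow> real"
  shows "(\<Sum>i\<in>UNIV. v i * Pm v (i#J) (Suc m))
       = rr v * Pm v J m + (2 * real m + 2 - real (length J)) * Pm v J (Suc m)"
proof -
  have "(\<Sum>i\<in>UNIV. v i * Pm v (i#J) (Suc m))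
      = (\<Sum>i\<in>UNIV. (v i)^2 * Pm v J m + v i * (real (count (mset J) i) * Pm v (remove1 i J) m))"
    by (intro sum.cong) (auto simp: algebra_simps power2_eq_square)
  also have "\<dots> = rr v * Pm v J m + (\<Sum>i\<in>UNIV. v i * (real (count (mset J) i) * Pm v (remove1 i J) m))"
    by (simp add: sum.distrib rr_def sum_distrib_right)
  finally show ?thesis by (simp add: euler)
qed

lemma Pm_zero_nonnil: "J \<noteq> [] \<Longrightarrow> Pm v J 0 = 0"
  by (cases J) auto

lemma contr_b:
  fixes v :: "'a::finite \<Rightarrow> real"
  shows "(\<Sum>i\<in>UNIV. Pm v (i#i#K) (Suc m))
       = (case m of 0 \<Rightarrow> 0 | Suc m' \<Rightarrow> rr v * Pm v K m')
         + (2 * real m + real CARD('a)) * Pm v K m"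
proof -
  have "(\<Sum>i\<in>UNIV. Pm v (i#i#K) (Suc m))
      = (\<Sum>i\<in>UNIV. v i * Pm v (i#K) m + (1 + real (count (mset K) i)) * Pm v K m)"
    by (intro sum.cong) auto
  also have "\<dots> = (\<Sum>i\<in>UNIV. v i * Pm v (i#K) m) + (real CARD('a) + real (length K)) * Pm v K m"
    by (simp add: sum.distrib sum_distrib_right[symmetric] sum_count_mset)
  finally have E: "(\<Sum>i\<in>UNIV. Pm v (i#i#K) (Suc m))
      = (\<Sum>i\<in>UNIV. v i * Pm v (i#K) m) + (real CARD('a) + real (length K)) * Pm v K m" .
  show ?thesis
  proof (cases m)
    case 0
    have "real (length K) * Pm v K 0 = 0" by (cases K) auto
    thus ?thesis using E 0 by (simp add: algebra_simps)
  next
    case (Suc m')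
    have "(\<Sum>i\<in>UNIV. v i * Pm v (i#K) m) = rr v * Pm v K m' + (2 * real m' + 2 - real (length K)) * Pm v K m"
      unfolding Suc by (rule contr_a)
    thus ?thesis unfolding E using Suc by (simp add: algebra_simps)
  qed
qed

definition GG :: "('a::finite \<Rightarrow> real) \<Rightarrow> nat \<Rightarrow> nat \<Rightarrow> nat \<Rightarrow> real" where
  "GG v k n n' = (\<Sum>I\<in>lenl k. Pm v I n * Pm v I n')"

lemma GG_0: "GG v 0 n n' = (if n = 0 \<and> n' = 0 then 1 else 0)"
  by (simp add: GG_def lenl_0)

lemma GG_Suc_0: "GG v (Suc k) 0 n' = 0"
  by (simp add: GG_def sum_lenl_Suc)

lemma GG_Suc_0': "GG v (Suc k) n 0 = 0"
  by (simp add: GG_def sum_lenl_Suc)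

lemma GG_rec:
  fixes v :: "'a::finite \<Rightarrow> real"
  shows "GG v (Suc k) (Suc n) (Suc m)
     = rr v * GG v k n m + (2 * real m + 2 - real k) * GG v k n (Suc m)
       + real k * ((case m of 0 \<Rightarrow> 0 | Suc m' \<Rightarrow> rr v * GG v (k - 1) n m')
                   + (2 * real m + real CARD('a)) * GG v (k - 1) n m)"
proof -
  have "GG v (Suc k) (Suc n) (Suc m)
      = (\<Sum>i\<in>UNIV. \<Sum>J\<in>lenl k. (v i * Pm v J n + real (count (mset J) i) * Pm v (remove1 i J) n)
            * Pm v (i#J) (Suc m))"
    by (simp add: GG_def sum_lenl_Suc)
  also have "\<dots> = (\<Sum>J\<in>lenl k. Pm v J n * (\<Sum>i\<in>UNIV. v i * Pm v (i#J) (Suc m)))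
     + (\<Sum>i\<in>UNIV. \<Sum>J\<in>lenl k. real (count (mset J) i) * (Pm v (remove1 i J) n * Pm v (i#J) (Suc m)))"
    by (simp add: algebra_simps sum.distrib sum_distrib_left sum.swap[of _ UNIV])
  also have "(\<Sum>J\<in>lenl k. Pm v J n * (\<Sum>i\<in>UNIV. v i * Pm v (i#J) (Suc m)))
      = rr v * GG v k n m + (2 * real m + 2 - real k) * GG v k n (Suc m)"
  proof -
    have "(\<Sum>J\<in>lenl k. Pm v J n * (\<Sum>i\<in>UNIV. v i * Pm v (i#J) (Suc m)))
      = (\<Sum>J\<in>lenl k. rr v * (Pm v J n * Pm v J m) + (2 * real m + 2 - real k) * (Pm v J n * Pm v J (Suc m)))"
    proof (rule sum.cong[OF refl])
      fix J :: "'a list" assume "J \<in> lenl k"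
      then have "length J = k" by (simp add: lenl_def)
      then show "Pm v J n * (\<Sum>i\<in>UNIV. v i * Pm v (i#J) (Suc m))
        = rr v * (Pm v J n * Pm v J m) + (2 * real m + 2 - real k) * (Pm v J n * Pm v J (Suc m))"
        by (subst contr_a) (simp add: algebra_simps)
    qed
    thus ?thesis by (simp add: GG_def sum.distrib sum_distrib_left mult.commute)
  qed
  also have "(\<Sum>i\<in>UNIV. \<Sum>J\<in>lenl k. real (count (mset J) i) * (Pm v (remove1 i J) n * Pm v (i#J) (Suc m)))
      = real k * ((case m of 0 \<Rightarrow> 0 | Suc m' \<Rightarrow> rr v * GG v (k - 1) n m')
                   + (2 * real m + real CARD('a)) * GG v (k - 1) n m)"
  proof (cases k)
    case 0 thus ?thesis by (simp add: lenl_0)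
  next
    case (Suc k')
    have "(\<Sum>J\<in>lenl k. real (count (mset J) i) * (Pm v (remove1 i J) n * Pm v (i#J) (Suc m)))
       = real k * (\<Sum>K\<in>lenl k'. Pm v K n * Pm v (i#i#K) (Suc m))" for i
    proof -
      have "(\<Sum>J\<in>lenl k. real (count (mset J) i) * (Pm v (remove1 i J) n * Pm v (i#J) (Suc m)))
         = (\<Sum>J\<in>lenl (Suc k'). real (count (mset J) i) * (Pm v (remove1 i J) n * Pm v (i#i#remove1 i J) (Suc m)))"
      proof (unfold Suc, rule sum.cong[OF refl])
        fix J :: "'a list"
        show "real (count (mset J) i) * (Pm v (remove1 i J) n * Pm v (i#J) (Suc m))
           = real (count (mset J) i) * (Pm v (remove1 i J) n * Pm v (i#i#remove1 i J) (Suc m))"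
        proof (cases "i \<in> set J")
          case True
          have "Pm v (i#J) (Suc m) = Pm v (i#i#remove1 i J) (Suc m)"
            by (rule Pm_mset) (simp add: True)
          thus ?thesis by simp
        qed (simp add: count_eq_zero_iff)
      qed
      also have "\<dots> = real (Suc k') * (\<Sum>K\<in>lenl k'. Pm v K n * Pm v (i#i#K) (Suc m))"
        by (rule sum_count_remove1[of "\<lambda>K. Pm v K n * Pm v (i#i#K) (Suc m)"])
           (metis Pm_mset mset.simps(2))
      finally show ?thesis using Suc by simp
    qed
    then have "(\<Sum>i\<in>UNIV. \<Sum>J\<in>lenl k. real (count (mset J) i) * (Pm v (remove1 i J) n * Pm v (i#J) (Suc m)))
        = real k * (\<Sum>K\<in>lenl k'. Pm v K n * (\<Sum>i\<in>UNIV. Pm v (i#i#K) (Suc m)))"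
      by (simp add: sum_distrib_left sum.swap[of _ UNIV])
    also have "\<dots> = real k * ((case m of 0 \<Rightarrow> 0 | Suc m' \<Rightarrow> rr v * GG v k' n m')
                   + (2 * real m + real CARD('a)) * GG v k' n m)"
    proof -
      have "(\<Sum>K\<in>lenl k'. Pm v K n * (\<Sum>i\<in>UNIV. Pm v (i#i#K) (Suc m)))
        = (\<Sum>K\<in>lenl k'. (case m of 0 \<Rightarrow> 0 | Suc m' \<Rightarrow> rr v * (Pm v K n * Pm v K m'))
            + (2 * real m + real CARD('a)) * (Pm v K n * Pm v K m))"
      proof (rule sum.cong[OF refl])
        fix K :: "'a list"
        show "Pm v K n * (\<Sum>i\<in>UNIV. Pm v (i#i#K) (Suc m))
          = (case m of 0 \<Rightarrow> 0 | Suc m' \<Rightarrow> rr v * (Pm v K n * Pm v K m'))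
            + (2 * real m + real CARD('a)) * (Pm v K n * Pm v K m)"
          by (subst contr_b) (simp add: algebra_simps split: nat.split)
      qed
      thus ?thesis
        by (cases m) (simp_all add: GG_def sum.distrib sum_distrib_left mult.commute)
    qed
    finally have X: "(\<Sum>i\<in>UNIV. \<Sum>J\<in>lenl k. real (count (mset J) i) * (Pm v (remove1 i J) n * Pm v (i#J) (Suc m)))
      = real k * ((case m of 0 \<Rightarrow> 0 | Suc m' \<Rightarrow> rr v * GG v k' n m')
                   + (2 * real m + real CARD('a)) * GG v k' n m)" .
    have kk: "k - 1 = k'" using Suc by simp
    show ?thesis unfolding kk by (rule X)
  qed
  finally show ?thesis .
qed

lemma GG_inv:
  fixes v w :: "'a::finite \<Rightarrow> real"
  assumes "rr v = rr w"
  shows "GG v k n m = GG w k n m"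
proof (induction k arbitrary: n m rule: less_induct)
  case (less k)
  show ?case
  proof (cases k)
    case 0 thus ?thesis by (simp add: GG_0)
  next
    case (Suc k')
    show ?thesis
    proof (cases n)
      case 0 thus ?thesis using Suc by (simp add: GG_Suc_0)
    next
      case (Suc n')
      show ?thesis
      proof (cases m)
        case 0 thus ?thesis using \<open>k = Suc k'\<close> by (simp add: GG_Suc_0')
      next
        case (Suc m')
        have h1: "\<And>a b. GG v k' a b = GG w k' a b" using less \<open>k = Suc k'\<close> by simp
        have h2: "\<And>a b. GG v (k' - Suc 0) a b = GG w (k' - Suc 0) a b" using less \<open>k = Suc k'\<close> by simp
        show ?thesis using \<open>k = Suc k'\<close> \<open>n = Suc n'\<close> Suc
          by (simp add: GG_rec h1 h2 assms split: nat.split)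
      qed
    qed
  qed
qed

fun dfe :: "nat \<Rightarrow> real" where
  "dfe 0 = 1"
| "dfe (Suc 0) = 0"
| "dfe (Suc (Suc m)) = real (Suc m) * dfe m"

lemma dfe_odd: "odd m \<Longrightarrow> dfe m = 0"
  by (induction m rule: dfe.induct) auto

lemma dfe_Suc: "dfe (Suc c) = real c * dfe (c - 1)"
  by (cases c) auto

lemma dfe_sq: "(dfe (2*w))^2 = fact (2*w) * (-1)^w * ((-1/2) gchoose w)"
proof (induction w)
  case 0 thus ?case by simp
next
  case (Suc w)
  have e: "2 * Suc w = Suc (Suc (2*w))" by simp
  have g: "((-1/2::real) gchoose Suc w) = ((-1/2) gchoose w) * ((-1/2 - real w) / real (Suc w))"
    using gbinomial_rec[of "-3/2 - real w + 0" w] 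
    by (simp add: gbinomial_pochhammer pochhammer_Suc field_simps)
  have "(dfe (2 * Suc w))^2 = (real (Suc (2*w)))^2 * (dfe (2*w))^2"
    unfolding e by (simp add: power_mult_distrib)
  also have "\<dots> = (real (Suc (2*w)))^2 * (fact (2*w) * (-1)^w * ((-1/2) gchoose w))"
    by (simp only: Suc)
  also have "\<dots> = fact (2 * Suc w) * (-1)^(Suc w) * (((-1/2) gchoose w) * ((-1/2 - real w) / real (Suc w)))"
    unfolding e by (simp add: field_simps power2_eq_square)
  finally show ?case by (simp only: g)
qed

definition v0 :: "'a \<Rightarrow> real \<Rightarrow> 'a \<Rightarrow> real" where
  "v0 a0 \<rho> i = (if i = a0 then \<rho> else 0)"

definition pmc :: "'a::finite \<Rightarrow> 'a list \<Rightarrow> real" where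
  "pmc a0 I = (\<Prod>j\<in>UNIV-{a0}. dfe (count (mset I) j))"

fun Rf :: "real \<Rightarrow> nat \<Rightarrow> nat \<Rightarrow> real" where
  "Rf \<rho> 0 b = (if b = 0 then 1 else 0)"
| "Rf \<rho> (Suc a) 0 = 0"
| "Rf \<rho> (Suc a) (Suc b) = \<rho> * Rf \<rho> a b + real a * Rf \<rho> (a - 1) b"

definition Xf :: "real \<Rightarrow> nat \<Rightarrow> nat \<Rightarrow> nat \<Rightarrow> real" where
  "Xf \<rho> a l n = (if l div 2 \<le> n then Rf \<rho> a (n - l div 2) else 0)"

lemma pmc_cons_a0: "pmc a0 (a0#J) = pmc a0 J"
  unfolding pmc_def by (intro prod.cong) auto

lemma pmc_remove1_a0: "pmc a0 (remove1 a0 J) = pmc a0 J"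
  unfolding pmc_def by (intro prod.cong) (auto simp: mset_remove1)

lemma pmc_cons_other:
  fixes a0 :: "'a::finite"
  assumes "i \<noteq> a0"
  shows "pmc a0 (i#J) = real (count (mset J) i) * pmc a0 (remove1 i J)"
proof -
  have iU: "i \<in> UNIV - {a0}" using assms by simp
  have "pmc a0 (i#J) = dfe (count (mset (i#J)) i) * (\<Prod>j\<in>UNIV-{a0}-{i}. dfe (count (mset (i#J)) j))"
    unfolding pmc_def by (rule prod.remove[OF _ iU]) simp
  also have "(\<Prod>j\<in>UNIV-{a0}-{i}. dfe (count (mset (i#J)) j)) = (\<Prod>j\<in>UNIV-{a0}-{i}. dfe (count (mset (remove1 i J)) j))"
    by (intro prod.cong) (auto simp: mset_remove1)
  also have "dfe (count (mset (i#J)) i) = real (count (mset J) i) * dfe (count (mset (remove1 i J)) i)"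
    by (simp add: dfe_Suc mset_remove1)
  also have "real (count (mset J) i) * dfe (count (mset (remove1 i J)) i) * (\<Prod>j\<in>UNIV-{a0}-{i}. dfe (count (mset (remove1 i J)) j))
     = real (count (mset J) i) * pmc a0 (remove1 i J)"
    unfolding pmc_def using prod.remove[OF _ iU, of "\<lambda>j. dfe (count (mset (remove1 i J)) j)"] by simp
  finally show ?thesis .
qed

lemma sum_count_nat: "(\<Sum>i\<in>(UNIV::'a::finite set). count (mset K) i) = length K"
proof -
  have "real (\<Sum>i\<in>(UNIV::'a set). count (mset K) i) = real (length K)"
    using sum_count_mset[of K] by simp
  thus ?thesis by linarith
qed

lemma pmc_parity:
  fixes a0 :: "'a::finite"
  assumes "pmc a0 I \<noteq> 0"
  shows "even (length I - count (mset I) a0)"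
proof -
  have ev: "even (count (mset I) j)" if "j \<in> UNIV - {a0}" for j
    using assms that dfe_odd unfolding pmc_def by (metis finite prod_zero_iff finite_Diff)
  have "length I = count (mset I) a0 + (\<Sum>j\<in>UNIV-{a0}. count (mset I) j)"
    using sum_count_nat[of I] sum.remove[of "UNIV::'a set" a0 "\<lambda>j. count (mset I) j"] by simp
  moreover have "even (\<Sum>j\<in>UNIV-{a0}. count (mset I) j)"
    by (intro dvd_sum) (use ev in auto)
  ultimately show ?thesis by simp
qed

lemma count_le_len: "count (mset xs) x \<le> length xs"
  by (induction xs) auto

lemma Xf_Suc: "Xf \<rho> (Suc a) l (Suc m) = \<rho> * Xf \<rho> a l m + real a * Xf \<rho> (a - 1) l m"
proof (cases "l div 2 \<le> m")
  case True
  then have "Suc m - l div 2 = Suc (m - l div 2)" by simp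
  thus ?thesis using True by (simp add: Xf_def)
next
  case False
  thus ?thesis by (cases "l div 2 = Suc m") (auto simp: Xf_def)
qed

lemma Xf_plus2: "Xf \<rho> a (l + 2) (Suc m) = Xf \<rho> a l m"
  by (simp add: Xf_def)

lemma Xf_Suc_0: "Xf \<rho> (Suc a) l 0 = 0"
  by (simp add: Xf_def)

lemma E1:
  fixes a0 :: "'a::finite"
  shows "Pm (v0 a0 \<rho>) I n = pmc a0 I * Xf \<rho> (count (mset I) a0) (length I - count (mset I) a0) n"
proof (induction "length I" arbitrary: I n rule: less_induct)
  case less
  show ?case
  proof (cases I)
    case Nil
    have "pmc a0 [] = 1" by (simp add: pmc_def)
    thus ?thesis using Nil by (simp add: Xf_def)
  next
    case (Cons i J)
    define a where "a = count (mset J) a0"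
    have aJ: "a \<le> length J" unfolding a_def by (rule count_le_len)
    show ?thesis
    proof (cases "i = a0")
      case True
      have cI: "count (mset I) a0 = Suc a" using Cons True a_def by simp
      have lI: "length I - count (mset I) a0 = length J - a" using Cons cI aJ by simp
      show ?thesis
      proof (cases n)
        case 0 thus ?thesis using cI Cons by (simp add: Xf_Suc_0)
      next
        case (Suc m)
        have h1: "Pm (v0 a0 \<rho>) J m = pmc a0 J * Xf \<rho> a (length J - a) m"
          using less.hyps[of J m] Cons a_def by simp
        have h2: "real a * Pm (v0 a0 \<rho>) (remove1 a0 J) m = real a * (pmc a0 J * Xf \<rho> (a - 1) (length J - a) m)"
        proof (cases "a = 0")
          case False
          then have inJ: "a0 \<in> set J" unfolding a_def by (simp add: count_eq_zero_iff)
          have "Pm (v0 a0 \<rho>) (remove1 a0 J) m = pmc a0 (remove1 a0 J) *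
              Xf \<rho> (count (mset (remove1 a0 J)) a0) (length (remove1 a0 J) - count (mset (remove1 a0 J)) a0) m"
            by (rule less.hyps) (use Cons in \<open>auto simp: length_remove1\<close>)
          moreover have "count (mset (remove1 a0 J)) a0 = a - 1" by (simp add: a_def mset_remove1)
          moreover have "length (remove1 a0 J) - (a - 1) = length J - a"
            using inJ False aJ by (simp add: length_remove1)
          ultimately show ?thesis by (simp add: pmc_remove1_a0)
        qed simp
        have "Pm (v0 a0 \<rho>) I n = \<rho> * Pm (v0 a0 \<rho>) J m + real a * Pm (v0 a0 \<rho>) (remove1 a0 J) m"
          using Cons True Suc a_def by (simp add: v0_def)
        also have "\<dots> = pmc a0 J * Xf \<rho> (Suc a) (length J - a) (Suc m)"
          unfolding h1 h2 Xf_Suc by (simp add: algebra_simps)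
        finally show ?thesis using Suc cI lI Cons True by (simp add: pmc_cons_a0)
      qed
    next
      case False
      define c where "c = count (mset J) i"
      have cI: "count (mset I) a0 = a" using Cons False a_def by simp
      have pI: "pmc a0 I = real c * pmc a0 (remove1 i J)"
        using Cons False c_def by (simp add: pmc_cons_other)
      show ?thesis
      proof (cases "c = 0")
        case True
        have "Pm (v0 a0 \<rho>) I n = 0" using Cons True False c_def by (cases n) (auto simp: v0_def)
        thus ?thesis using pI True by simp
      next
        case c0: False
        then have inJ: "i \<in> set J" unfolding c_def by (simp add: count_eq_zero_iff)
        have ar: "count (mset (remove1 i J)) a0 = a" using False by (simp add: a_def mset_remove1)
        have aJ': "a \<le> length (remove1 i J)" using count_le_len[of "remove1 i J" a0] ar by simp
        have lr: "length (remove1 i J) = length J - 1" using inJ by (simp add: length_remove1)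
        have lI: "length I - count (mset I) a0 = (length (remove1 i J) - a) + 2"
          using Cons cI lr aJ' inJ by (cases J) auto
        show ?thesis
        proof (cases n)
          case 0
          thus ?thesis using lI Cons by (simp add: Xf_def)
        next
          case (Suc m)
          have h: "Pm (v0 a0 \<rho>) (remove1 i J) m = pmc a0 (remove1 i J) * Xf \<rho> a (length (remove1 i J) - a) m"
            using less.hyps[of "remove1 i J" m] Cons ar by (simp add: length_remove1)
          have "Pm (v0 a0 \<rho>) I n = real c * Pm (v0 a0 \<rho>) (remove1 i J) m"
            using Cons False Suc c_def by (simp add: v0_def)
          moreover have lI': "length I - a = (length (remove1 i J) - a) + 2" using lI cI by simp
          ultimately show ?thesis unfolding h pI cI lI' Suc Xf_plus2 by simp
        qed
      qed
    qed
  qed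
qed

definition lenS :: "'a set \<Rightarrow> nat \<Rightarrow> 'a list set" where
  "lenS S k = {xs. set xs \<subseteq> S \<and> length xs = k}"

lemma finite_lenS[simp]: "finite S \<Longrightarrow> finite (lenS S k)"
  unfolding lenS_def by (rule finite_lists_length_eq)

lemma lenS_UNIV: "lenS UNIV k = lenl k" by (simp add: lenS_def lenl_def)

lemma lenS_0: "lenS S 0 = {[]}" by (auto simp: lenS_def)

lemma sum_lenS_Suc:
  fixes F :: "'a list \<Rightarrow> real"
  assumes "finite S"
  shows "(\<Sum>I\<in>lenS S (Suc m). F I) = (\<Sum>j\<in>S. \<Sum>K\<in>lenS S m. F (j#K))"
proof -
  have eq: "lenS S (Suc m) = (\<lambda>(j,K). j#K) ` (S \<times> lenS S m)"
    by (auto simp: lenS_def image_iff length_Suc_conv)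
  have inj: "inj_on (\<lambda>(j,K). j#K) (S \<times> lenS S m)" by (auto simp: inj_on_def)
  have "(\<Sum>I\<in>lenS S (Suc m). F I) = (\<Sum>p\<in>S \<times> lenS S m. F ((\<lambda>(j,K). j#K) p))"
    unfolding eq by (rule sum.reindex[OF inj, unfolded comp_def])
  also have "\<dots> = (\<Sum>(j,K)\<in>S \<times> lenS S m. F (j#K))"
    by (simp add: case_prod_beta')
  also have "\<dots> = (\<Sum>j\<in>S. \<Sum>K\<in>lenS S m. F (j#K))"
    by (rule sum.cartesian_product[symmetric])
  finally show ?thesis .
qed

lemma split_sum:
  fixes h :: "nat \<Rightarrow> 'a list \<Rightarrow> real"
  assumes fin: "finite B" and bB: "b \<notin> B"
  shows "(\<Sum>I\<in>lenS (insert b B) k. h (count (mset I) b) (filter (\<lambda>x. x \<noteq> b) I))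
       = (\<Sum>m\<le>k. real (k choose m) * (\<Sum>J\<in>lenS B m. h (k - m) J))"
proof (induction k arbitrary: h)
  case 0 thus ?case by (simp add: lenS_0)
next
  case (Suc k)
  have "(\<Sum>I\<in>lenS (insert b B) (Suc k). h (count (mset I) b) (filter (\<lambda>x. x \<noteq> b) I))
     = (\<Sum>K\<in>lenS (insert b B) k. h (Suc (count (mset K) b)) (filter (\<lambda>x. x \<noteq> b) K))
       + (\<Sum>j\<in>B. \<Sum>K\<in>lenS (insert b B) k. h (count (mset K) b) (j # filter (\<lambda>x. x \<noteq> b) K))"
  proof -
    have "(\<Sum>I\<in>lenS (insert b B) (Suc k). h (count (mset I) b) (filter (\<lambda>x. x \<noteq> b) I))
      = (\<Sum>j\<in>insert b B. \<Sum>K\<in>lenS (insert b B) k. h (count (mset (j#K)) b) (filter (\<lambda>x. x \<noteq> b) (j#K)))"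
      by (rule sum_lenS_Suc) (simp add: fin)
    also have "\<dots> = (\<Sum>K\<in>lenS (insert b B) k. h (count (mset (b#K)) b) (filter (\<lambda>x. x \<noteq> b) (b#K)))
        + (\<Sum>j\<in>B. \<Sum>K\<in>lenS (insert b B) k. h (count (mset (j#K)) b) (filter (\<lambda>x. x \<noteq> b) (j#K)))"
      by (rule sum.insert[OF fin bB])
    also have "(\<Sum>j\<in>B. \<Sum>K\<in>lenS (insert b B) k. h (count (mset (j#K)) b) (filter (\<lambda>x. x \<noteq> b) (j#K)))
       = (\<Sum>j\<in>B. \<Sum>K\<in>lenS (insert b B) k. h (count (mset K) b) (j # filter (\<lambda>x. x \<noteq> b) K))"
      by (intro sum.cong refl) (use bB in auto)
    finally show ?thesis by simp
  qed
  also have "(\<Sum>K\<in>lenS (insert b B) k. h (Suc (count (mset K) b)) (filter (\<lambda>x. x \<noteq> b) K))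
     = (\<Sum>m\<le>k. real (k choose m) * (\<Sum>J\<in>lenS B m. h (Suc (k - m)) J))"
    using Suc.IH[of "\<lambda>c J. h (Suc c) J"] by simp
  also have "(\<Sum>j\<in>B. \<Sum>K\<in>lenS (insert b B) k. h (count (mset K) b) (j # filter (\<lambda>x. x \<noteq> b) K))
     = (\<Sum>K\<in>lenS (insert b B) k. (\<lambda>c J. \<Sum>j\<in>B. h c (j # J)) (count (mset K) b) (filter (\<lambda>x. x \<noteq> b) K))"
    by (simp add: sum.swap[of _ B])
  also have "\<dots> = (\<Sum>m\<le>k. real (k choose m) * (\<Sum>J\<in>lenS B m. \<Sum>j\<in>B. h (k - m) (j # J)))"
    by (rule Suc.IH)
  also have "\<dots> = (\<Sum>m\<le>k. real (k choose m) * (\<Sum>J\<in>lenS B (Suc m). h (k - m) J))"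
    by (simp add: sum_lenS_Suc[OF fin] sum.swap[of _ B])
  finally have A: "(\<Sum>I\<in>lenS (insert b B) (Suc k). h (count (mset I) b) (filter (\<lambda>x. x \<noteq> b) I))
     = (\<Sum>m\<le>k. real (k choose m) * (\<Sum>J\<in>lenS B m. h (Suc k - m) J))
     + (\<Sum>m\<le>k. real (k choose m) * (\<Sum>J\<in>lenS B (Suc m). h (Suc k - Suc m) J))"
    by (simp add: Suc_diff_le)
  define F where "F m = (\<Sum>J\<in>lenS B m. h (Suc k - m) J)" for m
  have "(\<Sum>m\<le>Suc k. real (Suc k choose m) * F m)
      = (\<Sum>m\<le>Suc k. real (k choose m) * F m) + (\<Sum>m\<le>Suc k. real (if m = 0 then 0 else k choose (m - 1)) * F m)"
  proof -
    have "\<And>m. real (Suc k choose m) = real (k choose m) + real (if m = 0 then 0 else k choose (m - 1))"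
      by (case_tac m) auto
    thus ?thesis by (simp add: sum.distrib[symmetric] algebra_simps)
  qed
  also have "(\<Sum>m\<le>Suc k. real (k choose m) * F m) = (\<Sum>m\<le>k. real (k choose m) * F m)"
    by (simp add: sum.atMost_Suc)
  also have "(\<Sum>m\<le>Suc k. real (if m = 0 then 0 else k choose (m - 1)) * F m) = (\<Sum>m\<le>k. real (k choose m) * F (Suc m))"
    by (subst sum.atMost_Suc_shift) simp
  finally show ?case using A by (simp add: F_def)
qed

definition Sg :: "'a set \<Rightarrow> nat \<Rightarrow> real" where
  "Sg B m = (\<Sum>J\<in>lenS B m. (\<Prod>j\<in>B. dfe (count (mset J) j))^2)"

definition phi :: "nat \<Rightarrow> nat \<Rightarrow> real" where
  "phi M m = (if even m then fact m * (-1)^(m div 2) * ((- real M / 2) gchoose (m div 2)) else 0)"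

lemma sum_even_odd:
  fixes g :: "nat \<Rightarrow> real"
  shows "(\<Sum>t\<le>2*L. g t) = (\<Sum>u\<le>L. g (2*u)) + (\<Sum>u<L. g (2*u+1))"
proof (induction L)
  case 0 thus ?case by simp
next
  case (Suc L)
  have "{..2 * Suc L} = insert (2*L+2) (insert (2*L+1) {..2*L})" by auto
  then have "(\<Sum>t\<le>2*Suc L. g t) = g (2*L+2) + g (2*L+1) + (\<Sum>t\<le>2*L. g t)" by simp
  thus ?case using Suc by (simp add: algebra_simps)
qed

lemma conv_phi:
  "(\<Sum>t\<le>m. real (m choose t) * (dfe (m - t))^2 * phi M t) = phi (Suc M) m"
proof (cases "even m")
  case False
  have z: "real (m choose t) * (dfe (m - t))^2 * phi M t = 0" for t
  proof (cases "even t")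
    case True
    then have "odd (m - t) \<or> t > m" using False by auto
    thus ?thesis by (cases "t > m") (auto simp: dfe_odd)
  qed (simp add: phi_def)
  have "(\<Sum>t\<le>m. real (m choose t) * (dfe (m - t))^2 * phi M t) = 0"
    by (intro sum.neutral ballI) (rule z)
  moreover have "phi (Suc M) m = 0" using False by (simp add: phi_def)
  ultimately show ?thesis by simp
next
  case True
  then obtain L where m: "m = 2*L" by blast
  have odd0: "real (m choose (2*u+1)) * (dfe (m - (2*u+1)))^2 * phi M (2*u+1) = 0" for u
    by (simp add: phi_def)
  have ev: "real (m choose (2*u)) * (dfe (m - 2*u))^2 * phi M (2*u)
      = fact m * (-1)^L * (((- real M / 2) gchoose u) * ((-1/2) gchoose (L - u)))" if "u \<le> L" for u
  proof -
    have e1: "m - 2*u = 2*(L-u)" using m by simp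
    have e2: "real (m choose (2*u)) * fact (2*(L-u)) * fact (2*u) = fact m"
    proof -
      have "fact (2*u) * fact (m - 2*u) * (m choose (2*u)) = (fact m :: nat)"
        by (rule binomial_fact_lemma) (use that m in simp)
      then have "real (fact (2*u) * fact (m - 2*u) * (m choose (2*u))) = real (fact m)" by simp
      thus ?thesis unfolding e1 by (simp add: of_nat_mult algebra_simps)
    qed
    have e3: "(-1::real)^(L-u) * (-1)^u = (-1)^L"
      using that by (simp add: power_add[symmetric])
    have "real (m choose (2*u)) * (dfe (m - 2*u))^2 * phi M (2*u)
      = (real (m choose (2*u)) * fact (2*(L-u)) * fact (2*u)) * ((-1)^(L-u) * (-1)^u)
          * (((- real M / 2) gchoose u) * ((-1/2) gchoose (L - u)))"
      unfolding e1 dfe_sq by (simp add: phi_def algebra_simps)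
    thus ?thesis unfolding e2 e3 by simp
  qed
  define G where "G t = real (m choose t) * (dfe (m - t))^2 * phi M t" for t
  have "(\<Sum>t\<le>m. G t) = (\<Sum>u\<le>L. G (2*u)) + (\<Sum>u<L. G (2*u+1))"
    unfolding m by (rule sum_even_odd)
  also have "(\<Sum>u<L. G (2*u+1)) = 0"
    by (intro sum.neutral ballI) (simp only: G_def odd0)
  also have "(\<Sum>u\<le>L. G (2*u)) = (\<Sum>u\<le>L. fact m * (-1)^L * (((- real M / 2) gchoose u) * ((-1/2) gchoose (L - u))))"
    by (intro sum.cong refl) (simp only: G_def ev atMost_iff)
  finally have "(\<Sum>t\<le>m. real (m choose t) * (dfe (m - t))^2 * phi M t)
     = (\<Sum>u\<le>L. fact m * (-1)^L * (((- real M / 2) gchoose u) * ((-1/2) gchoose (L - u))))"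
    by (simp add: G_def)
  also have "\<dots> = fact m * (-1)^L * (\<Sum>u\<in>{0..L}. ((- real M / 2) gchoose u) * ((-1/2) gchoose (L - u)))"
    by (simp add: sum_distrib_left atMost_atLeast0)
  also have "\<dots> = fact m * (-1)^L * ((- real M / 2 + -1/2) gchoose L)"
    by (simp only: gbinomial_Vandermonde)
  also have "\<dots> = phi (Suc M) m"
    using m by (simp add: phi_def field_simps)
  finally show ?thesis .
qed

lemma Sg_formula:
  assumes "finite B"
  shows "Sg B m = phi (card B) m"
  using assms
proof (induction B arbitrary: m rule: finite_induct)
  case empty
  have "lenS {} m = (if m = 0 then {[]} else {})" by (auto simp: lenS_def)
  show ?case
  proof (cases m)
    case 0 thus ?thesis by (simp add: Sg_def phi_def lenS_0)
  next
    case (Suc n)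
    have "Sg {} m = 0" using Suc by (simp add: Sg_def lenS_def)
    moreover have "phi (card {}) m = 0"
    proof (cases "even m")
      case True
      then have "m div 2 \<noteq> 0" using Suc by auto
      thus ?thesis by (simp add: phi_def gbinomial_0_left)
    qed (simp add: phi_def)
    ultimately show ?thesis by simp
  qed
next
  case (insert b B)
  have "Sg (insert b B) m = (\<Sum>I\<in>lenS (insert b B) m.
        (\<lambda>c J. (dfe c)^2 * (\<Prod>j\<in>B. dfe (count (mset J) j))^2) (count (mset I) b) (filter (\<lambda>x. x \<noteq> b) I))"
  proof (unfold Sg_def, rule sum.cong[OF refl])
    fix I :: "'a list"
    have "(\<Prod>j\<in>B. dfe (count (mset I) j)) = (\<Prod>j\<in>B. dfe (count (mset (filter (\<lambda>x. x \<noteq> b) I)) j))"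
      by (intro prod.cong refl) (use insert.hyps in auto)
    thus "(\<Prod>j\<in>insert b B. dfe (count (mset I) j))^2
        = (\<lambda>c J. (dfe c)^2 * (\<Prod>j\<in>B. dfe (count (mset J) j))^2) (count (mset I) b) (filter (\<lambda>x. x \<noteq> b) I)"
      using insert.hyps by (simp add: power_mult_distrib)
  qed
  also have "\<dots> = (\<Sum>t\<le>m. real (m choose t) * (\<Sum>J\<in>lenS B t. (dfe (m - t))^2 * (\<Prod>j\<in>B. dfe (count (mset J) j))^2))"
    by (rule split_sum[OF insert.hyps])
  also have "\<dots> = (\<Sum>t\<le>m. real (m choose t) * (dfe (m - t))^2 * Sg B t)"
    by (simp only: Sg_def sum_distrib_left[symmetric] mult.assoc)
  also have "\<dots> = (\<Sum>t\<le>m. real (m choose t) * (dfe (m - t))^2 * phi (card B) t)"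
    by (intro sum.cong refl) (simp only: insert.IH)
  also have "\<dots> = phi (Suc (card B)) m"
    by (rule conv_phi)
  also have "Suc (card B) = card (insert b B)" using insert.hyps by simp
  finally show ?case .
qed

lemma Pm_deriv:
  fixes w :: "'a \<Rightarrow> real"
  shows "((\<lambda>t. Pm (\<lambda>i. w i + (if i = j then t else 0)) I n) has_real_derivative
           (if n = 0 then 0 else real (count (mset I) j) * Pm w (remove1 j I) (n - 1))) (at 0)"
proof (induction "length I" arbitrary: I n rule: less_induct)
  case less
  show ?case
  proof (cases I)
    case Nil thus ?thesis by simp
  next
    case (Cons i J)
    show ?thesis
    proof (cases n)
      case 0 then show ?thesis using Cons by simp
    next
      case (Suc m)
      define wt where "wt t = (\<lambda>i. w i + (if i = j then t else 0))" for t
      have w0: "wt 0 = w" by (simp add: wt_def)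
      have f: "(\<lambda>t. Pm (wt t) I n) = (\<lambda>t. (w i + (if i = j then t else 0)) * Pm (wt t) J m
                 + real (count (mset J) i) * Pm (wt t) (remove1 i J) m)"
        using Cons Suc by (simp add: wt_def)
      define DJ where "DJ = (if m = 0 then 0 else real (count (mset J) j) * Pm w (remove1 j J) (m - 1))"
      define DR where "DR = (if m = 0 then 0 else real (count (mset (remove1 i J)) j) * Pm w (remove1 j (remove1 i J)) (m - 1))"
      have d1: "((\<lambda>t. Pm (wt t) J m) has_real_derivative DJ) (at 0)"
        unfolding wt_def DJ_def by (rule less.hyps) (simp add: Cons)
      have d2: "((\<lambda>t. Pm (wt t) (remove1 i J) m) has_real_derivative DR) (at 0)"
        unfolding wt_def DR_def by (rule less.hyps) (auto simp: Cons length_remove1)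
      have d0: "((\<lambda>t. w i + (if i = j then t else 0)) has_real_derivative (if i = j then 1 else 0)) (at 0)"
        by (cases "i = j") (auto intro!: derivative_eq_intros)
      have D: "((\<lambda>t. Pm (wt t) I n) has_real_derivative
           (if i = j then 1 else 0) * Pm w J m + (w i + 0) * DJ + real (count (mset J) i) * DR) (at 0)"
      proof -
        have D0: "((\<lambda>t. (w i + (if i = j then t else 0)) * Pm (wt t) J m
                 + real (count (mset J) i) * Pm (wt t) (remove1 i J) m) has_real_derivative
            (if i = j then 1 else 0) * Pm (wt 0) J m + DJ * (w i + (if i = j then 0 else 0))
              + real (count (mset J) i) * DR) (at 0)"
          by (intro DERIV_add DERIV_mult DERIV_cmult d0 d1 d2)
        show ?thesis unfolding f by (rule DERIV_cong[OF D0]) (simp add: w0 algebra_simps)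
      qed
      have alg: "(if i = j then 1 else 0) * Pm w J m + (w i + 0) * DJ + real (count (mset J) i) * DR
          = real (count (mset I) j) * Pm w (remove1 j I) (n - 1)"
      proof -
        have sc: "real (count (mset (i#J)) j) * Pm w (remove1 j (i#J)) m
           = (if j = i then Pm w J m else 0) + real (count (mset J) j) * Pm w (i # remove1 j J) m"
          by (rule step_cons)
        show ?thesis
        proof (cases m)
          case 0
          thus ?thesis using sc Cons Suc by (simp add: DJ_def DR_def)
        next
          case (Suc m')
          have "Pm w (i # remove1 j J) m = w i * Pm w (remove1 j J) m'
                + real (count (mset (remove1 j J)) i) * Pm w (remove1 i (remove1 j J)) m'"
            using Suc by simp
          thus ?thesis using sc Cons \<open>n = Suc m\<close> Suc cnt_comm[of J i j]
            by (simp add: DJ_def DR_def remove1_commute algebra_simps)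
        qed
      qed
      show ?thesis using D unfolding alg wt_def Suc by simp
    qed
  qed
qed


lemma vec_path_nth: "(y + t *\<^sub>R axis j 1) $ i = y $ i + (if i = j then t else 0)"
  by (simp add: axis_def)

lemma norm_path_sq:
  fixes y :: "real^'n"
  shows "(norm (y + t *\<^sub>R axis j 1))^2 = (norm y)^2 + 2 * t * (y $ j) + t^2"
proof -
  have "(norm (y + t *\<^sub>R axis j 1))^2 = inner (y + t *\<^sub>R axis j 1) (y + t *\<^sub>R axis j 1)"
    by (rule power2_norm_eq_inner)
  also have "\<dots> = inner y y + 2 * t * inner y (axis j 1) + t^2 * inner (axis j (1::real)) (axis j 1)"
    by (simp add: inner_add_left inner_add_right inner_commute power2_eq_square algebra_simps)
  also have "\<dots> = (norm y)^2 + 2 * t * (y $ j) + t^2"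
    by (simp add: inner_axis inner_axis_axis power2_norm_eq_inner)
  finally show ?thesis .
qed

lemma Dmulti_formula:
  fixes c :: "nat \<Rightarrow> real \<Rightarrow> real"
  assumes cd: "\<And>n u. u > 0 \<Longrightarrow> (c n has_real_derivative c (Suc n) u / 2) (at u)"
  shows "y \<noteq> 0 \<Longrightarrow> length I \<le> N \<Longrightarrow>
    Dmulti I (\<lambda>z. c 0 ((norm z)^2)) (y :: real^'n) = (\<Sum>n\<le>N. c n ((norm y)^2) * Pm (\<lambda>i. y$i) I n)"
proof (induction I arbitrary: y N)
  case Nil
  have "(\<Sum>n\<le>N. c n ((norm y)^2) * Pm (\<lambda>i. y$i) [] n) = (\<Sum>n\<le>N. (if n = 0 then c 0 ((norm y)^2) else 0))"
    by (intro sum.cong) auto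
  thus ?case by simp
next
  case (Cons j I)
  define f where "f = (\<lambda>z::real^'n. c 0 ((norm z)^2))"
  define r where "r = (norm y)^2"
  have r0: "r > 0" using Cons.prems by (simp add: r_def)
  obtain N' where N: "N = Suc N'" using Cons.prems by (cases N) auto
  have IN: "length I \<le> N" using Cons.prems by simp
  define E where "E t = (\<Sum>n\<le>N. c n (r + 2 * t * (y $ j) + t^2) * Pm (\<lambda>i. y $ i + (if i = j then t else 0)) I n)" for t
  have ev: "eventually (\<lambda>t. Dmulti I f (y + t *\<^sub>R axis j 1) = E t) (nhds 0)"
  proof -
    have "((\<lambda>t. y + t *\<^sub>R axis j 1) \<longlongrightarrow> y + 0 *\<^sub>R axis j 1) (nhds (0::real))"
      unfolding tendsto_nhds_iff by (auto intro!: tendsto_eq_intros)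
    then have "eventually (\<lambda>t. y + t *\<^sub>R axis j 1 \<noteq> 0) (nhds (0::real))"
      using Cons.prems(1) by (intro tendsto_imp_eventually_ne) auto
    then show ?thesis
    proof (rule eventually_mono)
      fix t :: real assume nz: "y + t *\<^sub>R axis j 1 \<noteq> 0"
      have "Dmulti I f (y + t *\<^sub>R axis j 1) = (\<Sum>n\<le>N. c n ((norm (y + t *\<^sub>R axis j 1))^2)
              * Pm (\<lambda>i. (y + t *\<^sub>R axis j 1) $ i) I n)"
        unfolding f_def by (rule Cons.IH[OF nz IN])
      also have "\<dots> = E t" unfolding E_def r_def norm_path_sq vec_path_nth ..
      finally show "Dmulti I f (y + t *\<^sub>R axis j 1) = E t" .
    qed
  qed
  define D where "D n = (if n = 0 then 0 else real (count (mset I) j) * Pm (\<lambda>i. y$i) (remove1 j I) (n - 1))" for n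
  have dE: "(E has_real_derivative (\<Sum>n\<le>N. c (Suc n) r / 2 * (2 * (y $ j)) * Pm (\<lambda>i. y$i) I n
              + c n r * D n)) (at 0)"
    unfolding E_def
  proof (rule DERIV_sum)
    fix n assume "n \<in> {..N}"
    have q: "((\<lambda>t. r + 2 * t * (y $ j) + t^2) has_real_derivative 2 * (y $ j)) (at 0)"
      by (auto intro!: derivative_eq_intros)
    have cq: "((\<lambda>t. c n (r + 2 * t * (y $ j) + t^2)) has_real_derivative c (Suc n) r / 2 * (2 * (y $ j))) (at 0)"
      using DERIV_chain2[OF cd[of "r + 2 * 0 * (y $ j) + 0^2" n] q] r0 by simp
    have pq: "((\<lambda>t. Pm (\<lambda>i. y $ i + (if i = j then t else 0)) I n) has_real_derivative D n) (at 0)"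
      unfolding D_def by (rule Pm_deriv)
    show "((\<lambda>t. c n (r + 2 * t * (y $ j) + t^2) * Pm (\<lambda>i. y $ i + (if i = j then t else 0)) I n)
       has_real_derivative c (Suc n) r / 2 * (2 * (y $ j)) * Pm (\<lambda>i. y$i) I n + c n r * D n) (at 0)"
      using DERIV_mult[OF cq pq] by (simp add: algebra_simps)
  qed
  have dD: "((\<lambda>t. Dmulti I f (y + t *\<^sub>R axis j 1)) has_real_derivative
       (\<Sum>n\<le>N. c (Suc n) r / 2 * (2 * (y $ j)) * Pm (\<lambda>i. y$i) I n + c n r * D n)) (at 0)"
    using DERIV_cong_ev[OF refl ev refl] dE by simp
  have lhs: "Dmulti (j#I) f y = (\<Sum>n\<le>N. c (Suc n) r / 2 * (2 * (y $ j)) * Pm (\<lambda>i. y$i) I n + c n r * D n)"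
    using DERIV_imp_deriv[OF dD] by (simp add: partial_coord_def)
  have s1: "(\<Sum>n\<le>N. c (Suc n) r / 2 * (2 * (y $ j)) * Pm (\<lambda>i. y$i) I n)
      = (\<Sum>n\<le>N'. c (Suc n) r * ((y $ j) * Pm (\<lambda>i. y$i) I n))"
  proof -
    have "Pm (\<lambda>i. y$i) I N = 0" using Cons.prems N by (intro Pm_nil_len) simp
    thus ?thesis unfolding N by (simp add: sum.atMost_Suc mult.assoc)
  qed
  have s2: "(\<Sum>n\<le>N. c n r * D n)
      = (\<Sum>n\<le>N'. c (Suc n) r * (real (count (mset I) j) * Pm (\<lambda>i. y$i) (remove1 j I) n))"
    unfolding N by (subst sum.atMost_Suc_shift) (simp add: D_def)
  have rhs: "(\<Sum>n\<le>N. c n r * Pm (\<lambda>i. y$i) (j#I) n)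
      = (\<Sum>n\<le>N'. c (Suc n) r * ((y $ j) * Pm (\<lambda>i. y$i) I n
            + real (count (mset I) j) * Pm (\<lambda>i. y$i) (remove1 j I) n))"
    unfolding N by (subst sum.atMost_Suc_shift) simp
  show ?case
    unfolding f_def[symmetric] lhs sum.distrib s1 s2 r_def[symmetric] rhs
    by (simp add: sum.distrib[symmetric] algebra_simps)
qed

lemma sq_expand:
  fixes a :: "nat \<Rightarrow> real" and P :: "'b \<Rightarrow> nat \<Rightarrow> real"
  shows "(\<Sum>I\<in>A. (\<Sum>n\<le>K. a n * P I n)^2) = (\<Sum>n\<le>K. \<Sum>n'\<le>K. a n * a n' * (\<Sum>I\<in>A. P I n * P I n'))"
proof -
  have "(\<Sum>I\<in>A. (\<Sum>n\<le>K. a n * P I n)^2) = (\<Sum>I\<in>A. \<Sum>n\<le>K. \<Sum>n'\<le>K. a n * a n' * (P I n * P I n'))"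
    by (simp add: power2_eq_square sum_product algebra_simps)
  also have "\<dots> = (\<Sum>n\<le>K. \<Sum>I\<in>A. \<Sum>n'\<le>K. a n * a n' * (P I n * P I n'))"
    by (rule sum.swap)
  also have "\<dots> = (\<Sum>n\<le>K. \<Sum>n'\<le>K. \<Sum>I\<in>A. a n * a n' * (P I n * P I n'))"
    by (simp add: sum.swap[of _ A])
  finally show ?thesis by (simp add: sum_distrib_left)
qed

lemma rr_vec: "rr (\<lambda>i. (y::real^'n) $ i) = (norm y)^2"
proof -
  have "(norm y)^2 = inner y y" by (rule power2_norm_eq_inner)
  also have "inner y y = (\<Sum>i\<in>UNIV. y$i * y$i)" by (simp add: inner_vec_def)
  finally show ?thesis by (simp add: rr_def power2_eq_square)
qed

lemma rr_v0: "rr (v0 (a0::'a::finite) \<rho>) = \<rho>^2"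
proof -
  have "rr (v0 a0 \<rho>) = (\<Sum>i\<in>UNIV. (if i = a0 then \<rho>^2 else 0))"
    unfolding rr_def v0_def by (intro sum.cong) auto
  thus ?thesis by simp
qed

lemma len_filter_ne: "length (filter (\<lambda>x. x \<noteq> a) I) = length I - count (mset I) a"
proof -
  have "length (filter (\<lambda>x. a = x) I) + length (filter (\<lambda>x. \<not> a = x) I) = length I"
    by (rule sum_length_filter_compl)
  moreover have "count (mset I) a = length (filter (\<lambda>x. a = x) I)" by (induction I) auto
  moreover have "filter (\<lambda>x. x \<noteq> a) I = filter (\<lambda>x. \<not> a = x) I" by (metis)
  ultimately show ?thesis by simp
qed

lemma grad_formula:
  fixes c :: "nat \<Rightarrow> real \<Rightarrow> real" and x :: "real^'n"
  assumes cd: "\<And>n u. u > 0 \<Longrightarrow> (c n has_real_derivative c (Suc n) u / 2) (at u)"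
  assumes x: "x \<noteq> 0"
  shows "(grad_norm k (\<lambda>z. c 0 ((norm z)^2)) x)^2
     = (\<Sum>m\<le>k. real (k choose m) * phi (CARD('n) - 1) m
          * (\<Sum>n\<le>k. c n ((norm x)^2) * Xf (norm x) (k - m) m n)^2)"
proof -
  define \<rho> where "\<rho> = norm x"
  define a where "a n = c n (\<rho>^2)" for n
  define a0 where "a0 = (undefined :: 'n)"
  define B where "B = (UNIV :: 'n set) - {a0}"
  have UB: "insert a0 B = UNIV" by (auto simp: B_def)
  have finB: "finite B" and a0B: "a0 \<notin> B" by (auto simp: B_def)
  have cB: "card B = CARD('n) - 1" by (simp add: B_def card_Diff_singleton)
  define Y where "Y cc l = (\<Sum>n\<le>k. a n * Xf \<rho> cc l n)" for cc l
  have "(grad_norm k (\<lambda>z. c 0 ((norm z)^2)) x)^2 = (\<Sum>I\<in>lenl k. (Dmulti I (\<lambda>z. c 0 ((norm z)^2)) x)^2)"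
    unfolding grad_norm_def lenl_def by (rule real_sqrt_pow2, intro sum_nonneg, simp)
  also have "\<dots> = (\<Sum>I\<in>lenl k. (\<Sum>n\<le>k. a n * Pm (\<lambda>i. x$i) I n)^2)"
  proof (rule sum.cong[OF refl])
    fix I :: "'n list" assume "I \<in> lenl k"
    then have lk: "length I \<le> k" by (simp add: lenl_def)
    have "Dmulti I (\<lambda>z. c 0 ((norm z)^2)) x = (\<Sum>n\<le>k. c n ((norm x)^2) * Pm (\<lambda>i. x$i) I n)"
      using Dmulti_formula[where c=c, OF cd x lk] .
    then show "(Dmulti I (\<lambda>z. c 0 ((norm z)^2)) x)^2 = (\<Sum>n\<le>k. a n * Pm (\<lambda>i. x$i) I n)^2"
      by (simp only: a_def \<rho>_def)
  qed
  also have "\<dots> = (\<Sum>n\<le>k. \<Sum>n'\<le>k. a n * a n' * GG (\<lambda>i. x$i) k n n')"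
    unfolding GG_def by (rule sq_expand)
  also have "\<dots> = (\<Sum>n\<le>k. \<Sum>n'\<le>k. a n * a n' * GG (v0 a0 \<rho>) k n n')"
  proof -
    have "rr (\<lambda>i. x$i) = rr (v0 a0 \<rho>)" by (simp add: rr_vec rr_v0 \<rho>_def)
    then have "\<And>n n'. GG (\<lambda>i. x$i) k n n' = GG (v0 a0 \<rho>) k n n'" by (rule GG_inv)
    thus ?thesis by (simp only:)
  qed
  also have "\<dots> = (\<Sum>I\<in>lenl k. (\<Sum>n\<le>k. a n * Pm (v0 a0 \<rho>) I n)^2)"
    unfolding GG_def by (rule sq_expand[symmetric])
  also have "\<dots> = (\<Sum>I\<in>lenS (insert a0 B) k.
      (\<lambda>cc J. (\<Prod>j\<in>B. dfe (count (mset J) j))^2 * (Y cc (length J))^2) (count (mset I) a0) (filter (\<lambda>x. x \<noteq> a0) I))"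
  proof (unfold UB lenS_UNIV, rule sum.cong[OF refl])
    fix I :: "'n list"
    have p: "pmc a0 I = (\<Prod>j\<in>B. dfe (count (mset (filter (\<lambda>x. x \<noteq> a0) I)) j))"
      unfolding pmc_def B_def by (intro prod.cong refl) auto
    have "(\<Sum>n\<le>k. a n * Pm (v0 a0 \<rho>) I n) = pmc a0 I * Y (count (mset I) a0) (length I - count (mset I) a0)"
      unfolding Y_def E1 sum_distrib_left by (simp only: mult.left_commute)
    thus "(\<Sum>n\<le>k. a n * Pm (v0 a0 \<rho>) I n)^2 =
      (\<lambda>cc J. (\<Prod>j\<in>B. dfe (count (mset J) j))^2 * (Y cc (length J))^2) (count (mset I) a0) (filter (\<lambda>x. x \<noteq> a0) I)"
      unfolding p len_filter_ne by (simp add: power_mult_distrib)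
  qed
  also have "\<dots> = (\<Sum>m\<le>k. real (k choose m) * (\<Sum>J\<in>lenS B m. (\<Prod>j\<in>B. dfe (count (mset J) j))^2 * (Y (k - m) (length J))^2))"
    by (rule split_sum[OF finB a0B])
  also have "\<dots> = (\<Sum>m\<le>k. real (k choose m) * phi (CARD('n) - 1) m * (Y (k - m) m)^2)"
  proof (rule sum.cong[OF refl])
    fix m
    have "(\<Sum>J\<in>lenS B m. (\<Prod>j\<in>B. dfe (count (mset J) j))^2 * (Y (k - m) (length J))^2)
        = (\<Sum>J\<in>lenS B m. (\<Prod>j\<in>B. dfe (count (mset J) j))^2) * (Y (k - m) m)^2"
    proof -
      have "(\<Sum>J\<in>lenS B m. (\<Prod>j\<in>B. dfe (count (mset J) j))^2 * (Y (k - m) (length J))^2)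
        = (\<Sum>J\<in>lenS B m. (\<Prod>j\<in>B. dfe (count (mset J) j))^2 * (Y (k - m) m)^2)"
        by (intro sum.cong refl) (simp add: lenS_def)
      thus ?thesis by (simp only: sum_distrib_right)
    qed
    also have "\<dots> = phi (CARD('n) - 1) m * (Y (k - m) m)^2"
      unfolding Sg_def[symmetric] Sg_formula[OF finB] cB ..
    finally show "real (k choose m) * (\<Sum>J\<in>lenS B m. (\<Prod>j\<in>B. dfe (count (mset J) j))^2 * (Y (k - m) (length J))^2)
        = real (k choose m) * phi (CARD('n) - 1) m * (Y (k - m) m)^2" by simp
  qed
  finally show ?thesis unfolding Y_def a_def \<rho>_def .
qed

definition Fc :: "real \<Rightarrow> nat \<Rightarrow> nat \<Rightarrow> real" where
  "Fc \<rho> a b = (if b \<le> a \<and> a \<le> 2*b then fact a / (fact (2*b - a) * fact (a - b) * 2^(a - b)) * \<rho>^(2*b - a) else 0)"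

lemma Fc_sq: "Fc \<rho> (s + 2*q) (s + q) = fact (s + 2*q) / (fact s * fact q * 2^q) * \<rho>^s"
proof -
  have "2 * (s + q) - (s + 2*q) = s" "s + 2*q - (s + q) = q" by auto
  thus ?thesis by (simp add: Fc_def)
qed

lemma Rf_closed: "Rf \<rho> a b = Fc \<rho> a b"
proof (induction \<rho> a b rule: Rf.induct)
  case (1 \<rho> b) thus ?case by (simp add: Fc_def)
next
  case (2 \<rho> a) thus ?case by (simp add: Fc_def)
next
  case (3 \<rho> a b)
  have eq: "Rf \<rho> (Suc a) (Suc b) = \<rho> * Fc \<rho> a b + real a * Fc \<rho> (a - 1) b"
    using 3 by simp
  consider (A) "a < b \<or> a > 2*b + 1" | (B) "a = b" | (C) "a = 2*b + 1" | (D) "b < a \<and> a \<le> 2*b" by linarith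
  then show ?case
  proof cases
    case A
    then have "Fc \<rho> a b = 0" "Fc \<rho> (Suc a) (Suc b) = 0" by (auto simp: Fc_def)
    moreover have "real a * Fc \<rho> (a - 1) b = 0" using A by (cases a) (auto simp: Fc_def)
    ultimately show ?thesis using eq by simp
  next
    case B
    have "real a * Fc \<rho> (a - 1) b = 0" using B by (cases a) (auto simp: Fc_def)
    moreover have "Fc \<rho> a b = \<rho>^a" using B by (simp add: Fc_def)
    moreover have "Fc \<rho> (Suc a) (Suc b) = \<rho>^(Suc a)" using B by (simp add: Fc_def)
    ultimately show ?thesis using eq by simp
  next
    case C
    have "Fc \<rho> a b = 0" using C by (simp add: Fc_def)
    moreover have "Fc \<rho> (a - 1) b = fact (2*b) / (fact b * 2^b)"
      using Fc_sq[of \<rho> 0 b] C by simp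
    moreover have "Fc \<rho> (Suc a) (Suc b) = real (2*b+1) * (fact (2*b) / (fact b * 2^b))"
    proof -
      have "Fc \<rho> (Suc a) (Suc b) = fact (2*b+2) / (fact (Suc b) * 2^(Suc b))"
        using Fc_sq[of \<rho> 0 "Suc b"] C by (simp add: algebra_simps)
      also have "fact (2*b+2) = real (2*b+2) * (real (2*b+1) * (fact (2*b) :: real))"
        by (simp add: fact_Suc algebra_simps)
      also have "fact (Suc b) = real (Suc b) * (fact b :: real)" by simp
      also have "real (2*b+2) * (real (2*b+1) * fact (2*b)) / (real (Suc b) * fact b * 2^(Suc b))
          = real (2*b+1) * (fact (2*b) / (fact b * 2^b))"
      proof -
        have gen: "(2*u)*(r*F)/(u*fb*(2*p)) = r*(F/(fb*p))" if "u \<noteq> 0" for u r F fb p :: real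
          using that by (simp add: field_simps)
        have "real (2*b+2) = 2 * real (Suc b)" by simp
        moreover have "(2::real)^(Suc b) = 2 * 2^b" by simp
        ultimately show ?thesis using gen[of "real (Suc b)"] by (simp only:)
      qed
      finally show ?thesis .
    qed
    ultimately show ?thesis using eq C by simp
  next
    case D
    define s where "s = 2*b - a"
    define q where "q = a - b - 1"
    have a: "a = s + 2 * Suc q" and b: "b = s + Suc q" using D by (auto simp: s_def q_def)
    define F where "F = (fact (s + 2*q + 1) :: real)"
    define S where "S = real s + 1"
    define Q where "Q = real q + 1"
    have e1: "fact (s + 2 * Suc q) = (S + 2*Q - 1) * F"
      by (simp add: F_def S_def Q_def fact_Suc algebra_simps)
    have e2: "fact (Suc s + 2 * Suc q) = (S + 2*Q) * ((S + 2*Q - 1) * F)"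
      by (simp add: F_def S_def Q_def fact_Suc algebra_simps)
    have e3: "fact (Suc s + 2 * q) = F" by (simp add: F_def algebra_simps)
    have e4: "fact (Suc q) = Q * (fact q :: real)" by (simp add: Q_def)
    have e5: "fact (Suc s) = S * (fact s :: real)" by (simp add: S_def)
    have e6: "(2::real)^(Suc q) = 2 * 2^q" by simp
    have e7: "\<rho>^(Suc s) = \<rho> * \<rho>^s" by simp
    have ra: "real a = S + 2*Q - 1" using a by (simp add: S_def Q_def)
    have f1: "Fc \<rho> a b = (S + 2*Q - 1) * F / (fact s * (Q * fact q) * (2 * 2^q)) * \<rho>^s"
    proof -
      have "Fc \<rho> a b = fact (s + 2 * Suc q) / (fact s * fact (Suc q) * 2^(Suc q)) * \<rho>^s"
        unfolding a b by (rule Fc_sq)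
      thus ?thesis by (simp only: e1 e4 e6)
    qed
    have f2: "Fc \<rho> (a - 1) b = F / (S * fact s * fact q * 2^q) * (\<rho> * \<rho>^s)"
    proof -
      have "a - 1 = Suc s + 2*q" "b = Suc s + q" using a b by auto
      then have "Fc \<rho> (a - 1) b = fact (Suc s + 2 * q) / (fact (Suc s) * fact q * 2^q) * \<rho>^(Suc s)"
        using Fc_sq[of \<rho> "Suc s" q] by simp
      thus ?thesis by (simp only: e3 e5 e7)
    qed
    have f3: "Fc \<rho> (Suc a) (Suc b) = (S + 2*Q) * ((S + 2*Q - 1) * F)
          / (S * fact s * (Q * fact q) * (2 * 2^q)) * (\<rho> * \<rho>^s)"
    proof -
      have "Suc a = Suc s + 2 * Suc q" "Suc b = Suc s + Suc q" using a b by auto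
      then have "Fc \<rho> (Suc a) (Suc b) = fact (Suc s + 2 * Suc q) / (fact (Suc s) * fact (Suc q) * 2^(Suc q)) * \<rho>^(Suc s)"
        using Fc_sq[of \<rho> "Suc s" "Suc q"] by simp
      thus ?thesis by (simp only: e2 e4 e5 e6 e7)
    qed
    have gen: "\<rho> * ((x + 2*y - 1) * F / (fs * (y * fq) * (2 * p)) * r) + (x + 2*y - 1) * (F / (x * fs * fq * p) * (\<rho> * r))
       = (x + 2*y) * ((x + 2*y - 1) * F) / (x * fs * (y * fq) * (2 * p)) * (\<rho> * r)"
      if "x \<noteq> 0" "y \<noteq> 0" "fs \<noteq> 0" "fq \<noteq> 0" "p \<noteq> 0" for x y fs fq p r :: real
      using that by (simp add: field_simps)
    have pos: "S \<noteq> 0" "Q \<noteq> 0" "fact s \<noteq> (0::real)" "fact q \<noteq> (0::real)" "(2::real)^q \<noteq> 0"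
      by (auto simp: S_def Q_def)
    show ?thesis unfolding eq f1 f2 f3 ra by (rule gen[OF pos])
  qed
qed

lemma falling_pochhammer: "falling (a + real L - 1) L = pochhammer a L"
proof (induction L)
  case 0 thus ?case by (simp add: falling_def)
next
  case (Suc L)
  have "falling (a + real (Suc L) - 1) (Suc L) = (a + real L) * falling (a + real L - 1) L"
    unfolding falling_def by (subst prod.lessThan_Suc_shift) (simp add: algebra_simps)
  thus ?case using Suc by (simp add: pochhammer_Suc algebra_simps)
qed

lemma prod_s_gchoose: "(\<Prod>i<n. s - 2 * real i) = 2^n * fact n * ((s/2) gchoose n)"
proof (induction n)
  case 0 thus ?case by simp
next
  case (Suc n)
  have g: "((s/2) gchoose Suc n) = ((s/2) gchoose n) * ((s/2 - real n) / real (Suc n))"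
    using gbinomial_mult_1[of "s/2" n] by (simp add: field_simps)
  show ?case using Suc by (simp add: g field_simps)
qed

definition inner_g :: "(nat \<Rightarrow> real) \<Rightarrow> nat \<Rightarrow> nat \<Rightarrow> real" where
  "inner_g g k l = (\<Sum>n = (k + 1) div 2..k - l. 2 ^ (2*n + l - k) * g n
                  * real (n choose (k - n)) * real ((k - n) choose l))"

lemma Y_closed:
  fixes c :: "nat \<Rightarrow> real \<Rightarrow> real" and g :: "nat \<Rightarrow> real"
  assumes \<rho>: "\<rho> > 0"
  assumes hc: "\<And>n. k \<le> 2*n \<Longrightarrow> c n (\<rho>^2) = \<sigma> * 2^n * fact n * g n * \<rho> powr (e - 2 * real n)"
  assumes L: "L \<le> k div 2"
  shows "(\<Sum>n\<le>k. c n (\<rho>^2) * Xf \<rho> (k - 2*L) (2*L) n)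
       = \<sigma> * \<rho> powr (e - real k) * (fact (k - 2*L) * fact L) * inner_g g k L"
proof -
  define T where "T n = 2 ^ (2*n + L - k) * g n * real (n choose (k - n)) * real ((k - n) choose L)" for n
  have "(\<Sum>n\<le>k. c n (\<rho>^2) * Xf \<rho> (k - 2*L) (2*L) n)
      = (\<Sum>n\<in>{(k + 1) div 2..k - L}. \<sigma> * \<rho> powr (e - real k) * (fact (k - 2*L) * fact L) * T n)"
  proof (rule sum.mono_neutral_cong_right)
    show "finite {..k}" by simp
    show "{(k + 1) div 2..k - L} \<subseteq> {..k}" by auto
    show "\<forall>n\<in>{..k} - {(k + 1) div 2..k - L}. c n (\<rho>^2) * Xf \<rho> (k - 2*L) (2*L) n = 0"
    proof
      fix n assume "n \<in> {..k} - {(k + 1) div 2..k - L}"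
      then have "n < (k+1) div 2 \<or> n > k - L" by auto
      then have "Xf \<rho> (k - 2*L) (2*L) n = 0"
        using L by (auto simp: Xf_def Rf_closed Fc_def)
      thus "c n (\<rho>^2) * Xf \<rho> (k - 2*L) (2*L) n = 0" by simp
    qed
    fix n assume n: "n \<in> {(k + 1) div 2..k - L}"
    define p where "p = k - n - L"
    define t where "t = 2*n - k"
    have nn: "n = p + t + L" and kk: "k = 2*p + t + 2*L" using n L by (auto simp: p_def t_def)
    have k2n: "k \<le> 2*n" using n by auto
    have X: "Xf \<rho> (k - 2*L) (2*L) n = fact (t + 2*p) / (fact t * fact p * 2^p) * \<rho>^t"
    proof -
      have "Xf \<rho> (k - 2*L) (2*L) n = Rf \<rho> (t + 2*p) (t + p)"
        unfolding Xf_def using nn kk by (simp add: algebra_simps)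
      thus ?thesis by (simp add: Rf_closed Fc_sq)
    qed
    have b1: "real (n choose (k - n)) = fact (p + t + L) / (fact (p + L) * fact t)"
    proof -
      have "k - n = p + L" using nn kk by simp
      moreover have "p + L \<le> p + t + L" by simp
      ultimately show ?thesis using nn binomial_fact[of "p + L" "p + t + L", where 'a=real]
        by (simp add: algebra_simps)
    qed
    have b2: "real ((k - n) choose L) = fact (p + L) / (fact L * fact p)"
    proof -
      have "k - n = p + L" using nn kk by simp
      thus ?thesis using binomial_fact[of L "p + L", where 'a=real] by (simp add: algebra_simps)
    qed
    have e2: "2 * n + L - k = t + L" using nn kk by simp
    have e3: "k - 2*L = t + 2*p" using kk by simp
    have pw: "\<rho> powr (e - 2 * real n) * \<rho>^t = \<rho> powr (e - real k)"
    proof -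
      have "\<rho>^t = \<rho> powr (real t)" using \<rho> by (simp add: powr_realpow)
      hence "\<rho> powr (e - 2 * real n) * \<rho>^t = \<rho> powr (e - 2 * real n + real t)" by (simp add: powr_add)
      also have "e - 2 * real n + real t = e - real k" using nn kk by simp
      finally show ?thesis .
    qed
    have p2: "(2::real)^n = 2^p * 2^(t + L)" using nn by (simp add: power_add[symmetric] algebra_simps)
    have "c n (\<rho>^2) * Xf \<rho> (k - 2*L) (2*L) n
        = \<sigma> * (2^p * 2^(t + L)) * fact (p + t + L) * g n * (\<rho> powr (e - 2 * real n) * \<rho>^t)
          * (fact (t + 2*p) / (fact t * fact p * 2^p))"
      unfolding hc[OF k2n] X p2 using nn by (simp add: algebra_simps)
    also have "\<dots> = \<sigma> * \<rho> powr (e - real k) * (fact (t + 2*p) * fact L)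
          * (2 ^ (t + L) * g n * (fact (p + t + L) / (fact (p + L) * fact t)) * (fact (p + L) / (fact L * fact p)))"
      unfolding pw by (simp add: field_simps)
    also have "\<dots> = \<sigma> * \<rho> powr (e - real k) * (fact (k - 2*L) * fact L) * T n"
      unfolding T_def e2 e3 b1 b2 ..
    finally show "c n (\<rho>^2) * Xf \<rho> (k - 2*L) (2*L) n = \<sigma> * \<rho> powr (e - real k) * (fact (k - 2*L) * fact L) * T n" .
  qed
  also have "\<dots> = \<sigma> * \<rho> powr (e - real k) * (fact (k - 2*L) * fact L) * inner_g g k L"
    by (simp add: inner_g_def T_def sum_distrib_left)
  finally show ?thesis .
qed

lemma sum_even_part:
  fixes h :: "nat \<Rightarrow> real"
  assumes "\<And>m. odd m \<Longrightarrow> h m = 0"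
  shows "(\<Sum>m\<le>k. h m) = (\<Sum>L = 0..k div 2. h (2*L))"
proof -
  have inj: "inj_on (\<lambda>L. 2*L) {0..k div 2}" by (auto simp: inj_on_def)
  have "(\<Sum>L = 0..k div 2. h (2*L)) = (\<Sum>m\<in>(\<lambda>L. 2*L) ` {0..k div 2}. h m)"
    by (simp add: sum.reindex[OF inj])
  also have "\<dots> = (\<Sum>m\<le>k. h m)"
  proof (rule sum.mono_neutral_left)
    show "finite {..k}" by simp
    show "(\<lambda>L. 2*L) ` {0..k div 2} \<subseteq> {..k}" by auto
    show "\<forall>i\<in>{..k} - (\<lambda>L. 2*L) ` {0..k div 2}. h i = 0"
    proof
      fix i assume i: "i \<in> {..k} - (\<lambda>L. 2*L) ` {0..k div 2}"
      have "odd i"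
      proof
        assume "even i"
        then obtain L where "i = 2*L" by blast
        moreover have "L \<le> k div 2" using i \<open>i = 2*L\<close> by auto
        ultimately show False using i by auto
      qed
      thus "h i = 0" by (rule assms)
    qed
  qed
  finally show ?thesis by simp
qed

lemma final_generic:
  fixes c :: "nat \<Rightarrow> real \<Rightarrow> real" and g :: "nat \<Rightarrow> real" and x :: "real^'n"
  assumes cd: "\<And>n u. u > 0 \<Longrightarrow> (c n has_real_derivative c (Suc n) u / 2) (at u)"
  assumes x: "x \<noteq> 0"
  assumes hc: "\<And>n. k \<le> 2*n \<Longrightarrow> c n ((norm x)^2) = \<sigma> * 2^n * fact n * g n * norm x powr (e - 2 * real n)"
  assumes \<sigma>: "\<sigma>^2 = 1"
  shows "(grad_norm k (\<lambda>z. c 0 ((norm z)^2)) x)^2 * (norm x powr (real k - e))^2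
     = fact k * (\<Sum>l = 0..k div 2. fact (k - 2*l) * fact l
            * falling ((real CARD('n) - 3) / 2 + real l) l * (inner_g g k l)^2)"
proof -
  define \<rho> where "\<rho> = norm x"
  have \<rho>0: "\<rho> > 0" using x by (simp add: \<rho>_def)
  define N where "N = CARD('n)"
  have N1: "N \<ge> 1" by (simp add: N_def Suc_le_eq)
  define Y where "Y m = (\<Sum>n\<le>k. c n (\<rho>^2) * Xf \<rho> (k - m) m n)" for m
  have "(grad_norm k (\<lambda>z. c 0 ((norm z)^2)) x)^2 = (\<Sum>m\<le>k. real (k choose m) * phi (N - 1) m * (Y m)^2)"
    unfolding Y_def \<rho>_def N_def by (rule grad_formula[where c=c, OF cd x])
  also have "\<dots> = (\<Sum>L = 0..k div 2. real (k choose (2*L)) * phi (N - 1) (2*L) * (Y (2*L))^2)"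
    by (rule sum_even_part) (simp add: phi_def)
  finally have G: "(grad_norm k (\<lambda>z. c 0 ((norm z)^2)) x)^2 = (\<Sum>L = 0..k div 2. real (k choose (2*L)) * phi (N - 1) (2*L) * (Y (2*L))^2)" .
  have trm: "real (k choose (2*L)) * phi (N - 1) (2*L) * (Y (2*L))^2 * (\<rho> powr (real k - e))^2
      = fact k * (fact (k - 2*L) * fact L * falling ((real N - 3) / 2 + real L) L * (inner_g g k L)^2)"
    if L: "L \<in> {0..k div 2}" for L
  proof -
    have L': "L \<le> k div 2" using L by simp
    have hc': "\<And>n. k \<le> 2*n \<Longrightarrow> c n (\<rho>^2) = \<sigma> * 2^n * fact n * g n * \<rho> powr (e - 2 * real n)"
      using hc unfolding \<rho>_def by simp
    have Yc: "Y (2*L) = \<sigma> * \<rho> powr (e - real k) * (fact (k - 2*L) * fact L) * inner_g g k L"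
      unfolding Y_def using Y_closed[where c=c and g=g and k=k, OF \<rho>0 hc' L'] .
    have pw: "(\<rho> powr (e - real k))^2 * (\<rho> powr (real k - e))^2 = 1"
    proof -
      have "\<rho> powr (e - real k) * \<rho> powr (real k - e) = 1" using \<rho>0 by (simp add: powr_add[symmetric])
      thus ?thesis by (simp add: power_mult_distrib[symmetric])
    qed
    define a where "a = real (N - 1) / 2"
    have ph: "phi (N - 1) (2*L) = fact (2*L) * (pochhammer a L / fact L)"
    proof -
      have "((- real (N - 1) / 2) gchoose L) = (-1)^L * pochhammer a L / fact L"
        using gbinomial_pochhammer[of "- a" L] by (simp add: a_def)
      moreover have "((-1::real)^L * (-1)^L) = 1" by (simp add: power_mult_distrib[symmetric])
      ultimately show ?thesis by (simp add: phi_def)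
    qed
    have fa: "pochhammer a L = falling ((real N - 3) / 2 + real L) L"
    proof -
      have e: "a + real L - 1 = (real N - 3) / 2 + real L" using N1 by (simp add: a_def of_nat_diff field_simps)
      have "falling ((real N - 3) / 2 + real L) L = pochhammer a L"
        using falling_pochhammer[of a L] unfolding e .
      thus ?thesis by simp
    qed
    have bf: "real (k choose (2*L)) * fact (2*L) * fact (k - 2*L) = fact k"
    proof -
      have "fact (2*L) * fact (k - 2*L) * (k choose (2*L)) = (fact k :: nat)"
        by (rule binomial_fact_lemma) (use L' in simp)
      then have "real (fact (2*L) * fact (k - 2*L) * (k choose (2*L))) = real (fact k)" by simp
      thus ?thesis by (simp add: algebra_simps)
    qed
    have "real (k choose (2*L)) * phi (N - 1) (2*L) * (Y (2*L))^2 * (\<rho> powr (real k - e))^2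
      = (real (k choose (2*L)) * fact (2*L) * fact (k - 2*L)) * (fact (k - 2*L) * fact L
          * (pochhammer a L / fact L) * (fact L) * (inner_g g k L)^2) * \<sigma>^2
          * ((\<rho> powr (e - real k))^2 * (\<rho> powr (real k - e))^2)"
      unfolding Yc ph by (simp add: power_mult_distrib algebra_simps power2_eq_square)
    also have "\<dots> = fact k * (fact (k - 2*L) * fact L * pochhammer a L * (inner_g g k L)^2)"
      unfolding bf pw \<sigma> by simp
    finally show ?thesis unfolding fa by (simp add: algebra_simps)
  qed
  have "(grad_norm k (\<lambda>z. c 0 ((norm z)^2)) x)^2 * (\<rho> powr (real k - e))^2
     = (\<Sum>L = 0..k div 2. real (k choose (2*L)) * phi (N - 1) (2*L) * (Y (2*L))^2 * (\<rho> powr (real k - e))^2)"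
    unfolding G by (simp add: sum_distrib_right)
  also have "\<dots> = (\<Sum>L = 0..k div 2. fact k * (fact (k - 2*L) * fact L * falling ((real N - 3) / 2 + real L) L * (inner_g g k L)^2))"
    by (rule sum.cong[OF refl]) (rule trm)
  finally show ?thesis unfolding \<rho>_def N_def by (simp add: sum_distrib_left)
qed

lemma sqrt_powr_deriv:
  assumes u: "u > 0"
  shows "((\<lambda>u. sqrt u powr a) has_real_derivative a * sqrt u powr (a - 2) / 2) (at u)"
proof -
  have su: "sqrt u > 0" using u by simp
  have D: "((\<lambda>u. sqrt u powr a) has_real_derivative a * sqrt u powr (a - 1) * (inverse (sqrt u) / 2)) (at u)"
    using DERIV_chain2[OF has_real_derivative_powr[OF su, of a] DERIV_real_sqrt[OF u]] .
  have "sqrt u powr (a - 2) = sqrt u powr (a - 1) / sqrt u powr 1"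
    using powr_diff[of "sqrt u" "a - 1" 1] by simp
  also have "\<dots> = sqrt u powr (a - 1) * inverse (sqrt u)" using su by (simp add: divide_inverse)
  finally have e: "sqrt u powr (a - 2) = sqrt u powr (a - 1) * inverse (sqrt u)" .
  show ?thesis using D unfolding e by (simp add: algebra_simps)
qed

theorem theorem1p2:
  fixes k :: nat and s :: real
  shows "(\<forall>x :: real^'n. x \<noteq> 0 \<longrightarrow>
      (norm x powr (real k - s) * grad_norm k (\<lambda>y. norm y powr s) x)\<^sup>2
      = fact k * (\<Sum>l = 0..k div 2. fact (k - 2*l) * fact l
            * falling ((real CARD('n) - 3) / 2 + real l) l
            * (\<Sum>n = (k + 1) div 2..k - l. 2 ^ (2*n + l - k) * ((s/2) gchoose n)
                  * real (n choose (k - n)) * real ((k - n) choose l))\<^sup>2))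
   \<and> (k \<ge> 1 \<longrightarrow> (\<forall>x :: real^'n. x \<noteq> 0 \<longrightarrow>
      (norm x ^ k * grad_norm k (\<lambda>y. ln (norm y)) x)\<^sup>2
      = fact k * (\<Sum>l = 0..k div 2. fact (k - 2*l) * fact l
            * falling ((real CARD('n) - 3) / 2 + real l) l
            * (\<Sum>n = (k + 1) div 2..k - l. 2 ^ (2*n + l - k) * ((-1) ^ n / (2 * real n))
                  * real (n choose (k - n)) * real ((k - n) choose l))\<^sup>2)))"
proof (intro conjI allI impI)
  fix x :: "real^'n" assume x: "x \<noteq> 0"
  define c where "c n u = (\<Prod>i<n. s - 2 * real i) * sqrt u powr (s - 2 * real n)" for n u
  have cd: "(c n has_real_derivative c (Suc n) u / 2) (at u)" if "u > 0" for n u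
  proof -
    have "((\<lambda>u. (\<Prod>i<n. s - 2 * real i) * sqrt u powr (s - 2 * real n)) has_real_derivative
        (\<Prod>i<n. s - 2 * real i) * ((s - 2 * real n) * sqrt u powr (s - 2 * real n - 2) / 2)) (at u)"
      by (intro DERIV_cmult sqrt_powr_deriv that)
    moreover have "(\<Prod>i<n. s - 2 * real i) * ((s - 2 * real n) * sqrt u powr (s - 2 * real n - 2) / 2)
        = c (Suc n) u / 2"
    proof -
      have e: "s - 2 * real n - 2 = s - 2 * real (Suc n)" by simp
      show ?thesis unfolding e c_def by (simp add: algebra_simps)
    qed
    moreover have "c n = (\<lambda>u. (\<Prod>i<n. s - 2 * real i) * sqrt u powr (s - 2 * real n))"
      by (simp add: c_def[abs_def])
    ultimately show ?thesis by simp
  qed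
  have hc: "c n ((norm x)^2) = 1 * 2^n * fact n * ((s/2) gchoose n) * norm x powr (s - 2 * real n)" if "k \<le> 2*n" for n
    by (simp add: c_def prod_s_gchoose)
  have f: "(\<lambda>y::real^'n. norm y powr s) = (\<lambda>z. c 0 ((norm z)^2))"
    by (simp add: c_def)
  have "(grad_norm k (\<lambda>z. c 0 ((norm z)^2)) x)^2 * (norm x powr (real k - s))^2
     = fact k * (\<Sum>l = 0..k div 2. fact (k - 2*l) * fact l
            * falling ((real CARD('n) - 3) / 2 + real l) l * (inner_g (\<lambda>n. (s/2) gchoose n) k l)^2)"
    by (rule final_generic[where c=c and \<sigma>=1, OF cd x hc]) simp_all
  thus "(norm x powr (real k - s) * grad_norm k (\<lambda>y. norm y powr s) x)\<^sup>2
      = fact k * (\<Sum>l = 0..k div 2. fact (k - 2*l) * fact l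
            * falling ((real CARD('n) - 3) / 2 + real l) l
            * (\<Sum>n = (k + 1) div 2..k - l. 2 ^ (2*n + l - k) * ((s/2) gchoose n)
                  * real (n choose (k - n)) * real ((k - n) choose l))\<^sup>2)"
    unfolding f inner_g_def by (simp add: power_mult_distrib mult.commute)
next
  fix x :: "real^'n" assume k: "k \<ge> 1" and x: "x \<noteq> 0"
  define c where "c n u = (if n = 0 then ln (sqrt u) else (-1)^(n-1) * 2^(n-1) * fact (n-1) / u^n)" for n u
  have cd: "(c n has_real_derivative c (Suc n) u / 2) (at u)" if u: "u > 0" for n u
  proof (cases n)
    case 0
    have su: "sqrt u > 0" using u by simp
    have D: "((\<lambda>u. ln (sqrt u)) has_real_derivative (1 / sqrt u) * (inverse (sqrt u) / 2)) (at u)"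
      using DERIV_chain2[OF DERIV_ln_divide[OF su] DERIV_real_sqrt[OF u]] .
    have V: "(1 / sqrt u) * (inverse (sqrt u) / 2) = c (Suc n) u / 2"
      using 0 u su by (simp add: c_def field_simps)
    have C: "c n = (\<lambda>u. ln (sqrt u))" using 0 by (simp add: c_def[abs_def])
    show ?thesis using D unfolding C V .
  next
    case (Suc m)
    define K where "K = (-1::real)^m * 2^m * fact m"
    have cn: "c n = (\<lambda>u. K / u^(Suc m))" using Suc by (simp add: c_def[abs_def] K_def)
    have D: "((\<lambda>u. K / u^(Suc m)) has_real_derivative - (K * (real (Suc m) * u^m)) / (u^(Suc m) * u^(Suc m))) (at u)"
      using DERIV_divide[OF DERIV_const DERIV_pow[of "Suc m" u], of K] u by simp
    have V: "- (K * (real (Suc m) * u^m)) / (u^(Suc m) * u^(Suc m)) = c (Suc n) u / 2"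
      using Suc u by (simp add: c_def K_def field_simps)
    show ?thesis using D unfolding cn V .
  qed
  have hc: "c n ((norm x)^2) = (-1) * 2^n * fact n * ((-1)^n / (2 * real n)) * norm x powr (0 - 2 * real n)"
    if kn: "k \<le> 2*n" for n
  proof -
    obtain m where n: "n = Suc m" using kn k by (cases n) auto
    have nx: "norm x > 0" using x by simp
    have pr: "norm x powr (2 * real n) = norm x ^ (2*n)" using powr_realpow[OF nx, of "2*n"] by simp
    have P: "norm x powr (0 - 2 * real n) = 1 / (norm x)^(2 * n)"
      using nx by (simp add: powr_minus pr divide_inverse)
    have G: "(-1)^m * 2^m * fact m / D = -1 * 2^(Suc m) * fact (Suc m) * ((-1)^(Suc m) / (2 * real (Suc m))) * (1 / D)" for D :: real
    proof -
      define r where "r = real (Suc m)"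
      have r0: "r \<noteq> 0" by (simp add: r_def)
      have "-1 * 2^(Suc m) * fact (Suc m) * ((-1)^(Suc m) / (2 * real (Suc m))) * (1 / D)
          = -1 * (2 * 2^m) * (r * fact m) * (- ((-1)^m) / (2 * r)) * (1 / D)"
        by (simp add: r_def)
      also have "\<dots> = (-1)^m * 2^m * fact m / D" using r0 by (simp add: field_simps)
      finally show ?thesis by simp
    qed
    have "c n ((norm x)^2) = (-1)^m * 2^m * fact m / (norm x)^(2*n)"
      using n by (simp add: c_def power_mult power2_eq_square)
    also have "\<dots> = -1 * 2^n * fact n * ((-1)^n / (2 * real n)) * (1 / (norm x)^(2*n))"
      unfolding n by (rule G)
    also have "\<dots> = (-1) * 2^n * fact n * ((-1)^n / (2 * real n)) * norm x powr (0 - 2 * real n)"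
      by (simp only: P)
    finally show ?thesis .
  qed
  have f: "(\<lambda>y::real^'n. ln (norm y)) = (\<lambda>z. c 0 ((norm z)^2))"
    by (simp add: c_def)
  have "(grad_norm k (\<lambda>z. c 0 ((norm z)^2)) x)^2 * (norm x powr (real k - 0))^2
     = fact k * (\<Sum>l = 0..k div 2. fact (k - 2*l) * fact l
            * falling ((real CARD('n) - 3) / 2 + real l) l * (inner_g (\<lambda>n. (-1) ^ n / (2 * real n)) k l)^2)"
    by (rule final_generic[where c=c and \<sigma>="-1", OF cd x hc]) simp_all
  moreover have "norm x powr (real k - 0) = norm x ^ k" using x by (simp add: powr_realpow)
  ultimately show "(norm x ^ k * grad_norm k (\<lambda>y. ln (norm y)) x)\<^sup>2
      = fact k * (\<Sum>l = 0..k div 2. fact (k - 2*l) * fact l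
            * falling ((real CARD('n) - 3) / 2 + real l) l
            * (\<Sum>n = (k + 1) div 2..k - l. 2 ^ (2*n + l - k) * ((-1) ^ n / (2 * real n))
                  * real (n choose (k - n)) * real ((k - n) choose l))\<^sup>2)"
    unfolding f inner_g_def by (simp add: power_mult_distrib mult.commute)
qed

end
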